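(* Let $d\ge 2$, $n\ge 1$, and let $h_1,\dots,h_m$ be traceless Hermitian operators on $(\mathbb{C}^d)^{\otimes n}$, each supported on 2 qudits and normalized as $\|h_i\|_\infty=1$. For every $U\in \mathrm{SU}(d^n)$, the circuit cost of $U$ with respect to $h_1,\dots,h_m$ satisfies $$\mathrm{Cost}(U)\ \ge\ \frac{1}{8}\,\mathrm{CiS}[U].$$
   Context: Let $V=\mathbb{Z}_d\times\mathbb{Z}_d$. For $a=(s,t)\in V$ let $P_a=X^sZ^t$, where $X|j\rangle=|j+1 \bmod d\rangle$ and $Z|j\rangle=e^{2\pi i j/d}|j\rangle$. For $\vec a\in V^n$, $P_{\vec a}=\bigotimes_{i=1}^n P_{a_i}$, and $|\vec a|$ is the number of indices $i$ with $a_i\neq(0,0)$. For operators $A,B$ on $(\mathbb{C}^d)^{\otimes n}$, $\langle A,B\rangle=d^{-n}\mathrm{Tr}(A^\dagger B)$ and $\|A\|_2=\sqrt{\langle A,A\rangle}$. For $O$ with $\|O\|_2=1$, $P_O[\vec a]=d^{-2n}|\mathrm{Tr}(OP_{\vec a})|^2$ (a probability distribution on $V^n$), and the total influence is $I[O]=\sum_{\vec a\in V^n}|\vec a|\,P_O[\vec a]$. The circuit sensitivity of a unitary $U$ is $\mathrm{CiS}[U]=\max_{O:\|O\|_2=1}|I[UOU^\dagger]-I[O]|$. The circuit cost of $U$ with respect to $h_1,\dots,h_m$ is $\mathrm{Cost}(U)=\inf\int_0^1\sum_{j=1}^m|r_j(s)|\,ds$, the infimum over all continuous $r_j:[0,1]\to\mathbb{R}$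 such that $U=\mathcal{P}\exp(-i\int_0^1 H(s)ds)$ with $H(s)=\sum_j r_j(s)h_j$, where $\mathcal{P}$ is path ordering (the infimum of the empty set is $+\infty$). *)

theory Defs
  imports "HOL-Analysis.Analysis" "Jordan_Normal_Form.Determinant"
begin

text \<open>Operators on (C^d)^{\<otimes>n} are complex matrices of dimension d^n.
  A basis index k < d^n encodes the computational basis string whose i-th digit
  (qudit i, 0 \<le> i < n) is qdigit d k i.\<close>

definition qdigit :: "nat \<Rightarrow> nat \<Rightarrow> nat \<Rightarrow> nat" where
  "qdigit d k i = (k div d ^ i) mod d"

definition adj :: "complex mat \<Rightarrow> complex mat" where
  "adj A = mat (dim_col A) (dim_row A) (\<lambda>(i,j). cnj (A $$ (j,i)))"

definition mtrace :: "complex mat \<Rightarrow> complex" where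
  "mtrace A = (\<Sum>i<dim_row A. A $$ (i,i))"

definition hermitian_op :: "complex mat \<Rightarrow> bool" where
  "hermitian_op A \<longleftrightarrow> adj A = A"

definition cvec_norm :: "complex vec \<Rightarrow> real" where
  "cvec_norm v = sqrt (\<Sum>i<dim_vec v. (cmod (v $ i))\<^sup>2)"

definition op_norm :: "complex mat \<Rightarrow> real" where
  "op_norm A = Sup {cvec_norm (A *\<^sub>v v) | v. v \<in> carrier_vec (dim_col A) \<and> cvec_norm v \<le> 1}"

definition hs_inner :: "nat \<Rightarrow> nat \<Rightarrow> complex mat \<Rightarrow> complex mat \<Rightarrow> complex" where
  "hs_inner d n A B = mtrace (adj A * B) / of_nat (d ^ n)"

definition hs_norm :: "nat \<Rightarrow> nat \<Rightarrow> complex mat \<Rightarrow> real" where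
  "hs_norm d n A = sqrt (Re (hs_inner d n A A))"

definition SU :: "nat \<Rightarrow> complex mat set" where
  "SU N = {U. U \<in> carrier_mat N N \<and> U * adj U = 1\<^sub>m N \<and> det U = 1}"

text \<open>Support on at most two qudits: h = g \<otimes> I for some operator g acting on the
  qudits in a set S with |S| \<le> 2.\<close>
definition two_qudit_supported :: "nat \<Rightarrow> nat \<Rightarrow> complex mat \<Rightarrow> bool" where
  "two_qudit_supported d n h \<longleftrightarrow>
     (\<exists>S g. S \<subseteq> {..<n} \<and> card S \<le> 2 \<and>
        (\<forall>k<d^n. \<forall>l<d^n.
           h $$ (k,l) = (if (\<forall>i<n. i \<notin> S \<longrightarrow> qdigit d k i = qdigit d l i)
                         then g (\<lambda>i. if i \<in> S then qdigit d k i else 0)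
                                (\<lambda>i. if i \<in> S then qdigit d l i else 0)
                         else 0)))"

text \<open>V^n = (Z_d x Z_d)^n, as functions nat \<Rightarrow> nat \<times> nat vanishing outside {..<n}.\<close>
definition Vn :: "nat \<Rightarrow> nat \<Rightarrow> (nat \<Rightarrow> nat \<times> nat) set" where
  "Vn d n = {a. (\<forall>i<n. fst (a i) < d \<and> snd (a i) < d) \<and> (\<forall>i\<ge>n. a i = (0,0))}"

definition pweight :: "nat \<Rightarrow> (nat \<Rightarrow> nat \<times> nat) \<Rightarrow> nat" where
  "pweight n a = card {i. i < n \<and> a i \<noteq> (0,0)}"

text \<open>Matrix entry \<langle>r| X^s Z^t |c\<rangle> on one qudit: X^s Z^t |c\<rangle> = \<omega>^{tc} |c+s mod d\<rangle>.\<close>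
definition pauli1_entry :: "nat \<Rightarrow> nat \<times> nat \<Rightarrow> nat \<Rightarrow> nat \<Rightarrow> complex" where
  "pauli1_entry d a r c =
     (if r = (c + fst a) mod d
      then exp (2 * pi * \<i> * of_nat (snd a * c) / of_nat d) else 0)"

definition pauli :: "nat \<Rightarrow> nat \<Rightarrow> (nat \<Rightarrow> nat \<times> nat) \<Rightarrow> complex mat" where
  "pauli d n a = mat (d^n) (d^n)
     (\<lambda>(k,l). \<Prod>i<n. pauli1_entry d (a i) (qdigit d k i) (qdigit d l i))"

definition pauli_prob :: "nat \<Rightarrow> nat \<Rightarrow> complex mat \<Rightarrow> (nat \<Rightarrow> nat \<times> nat) \<Rightarrow> real" where
  "pauli_prob d n A a = (cmod (mtrace (A * pauli d n a)))\<^sup>2 / real d ^ (2*n)"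

definition influence :: "nat \<Rightarrow> nat \<Rightarrow> complex mat \<Rightarrow> real" where
  "influence d n A = (\<Sum>a\<in>Vn d n. real (pweight n a) * pauli_prob d n A a)"

definition circuit_sensitivity :: "nat \<Rightarrow> nat \<Rightarrow> complex mat \<Rightarrow> real" where
  "circuit_sensitivity d n U =
     Sup {\<bar>influence d n (U * A * adj U) - influence d n A\<bar> | A.
            A \<in> carrier_mat (d^n) (d^n) \<and> hs_norm d n A = 1}"

text \<open>U = P exp(-i \<integral>_0^1 H(s) ds): U = W(1), where W solves W' = -i H W, W(0) = I
  on [0,1] (entrywise derivatives).\<close>
definition path_ordered_exp :: "nat \<Rightarrow> (real \<Rightarrow> complex mat) \<Rightarrow> complex mat \<Rightarrow> bool" where
  "path_ordered_exp N H U \<longleftrightarrow>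
     (\<exists>W :: real \<Rightarrow> complex mat.
        (\<forall>s\<in>{0..1}. W s \<in> carrier_mat N N) \<and> W 0 = 1\<^sub>m N \<and> W 1 = U \<and>
        (\<forall>s\<in>{0..1}. \<forall>k<N. \<forall>l<N.
           ((\<lambda>t. W t $$ (k,l)) has_vector_derivative (- \<i> * (H s * W s) $$ (k,l)))
             (at s within {0..1})))"

definition circuit_cost :: "nat \<Rightarrow> nat \<Rightarrow> (nat \<Rightarrow> complex mat) \<Rightarrow> complex mat \<Rightarrow> ereal" where
  "circuit_cost N m h U =
     Inf (ereal ` {integral {0..1} (\<lambda>s. \<Sum>j<m. \<bar>r j s\<bar>) | r :: nat \<Rightarrow> real \<Rightarrow> real.
            (\<forall>j<m. continuous_on {0..1} (r j)) \<and>
            path_ordered_exp N (\<lambda>s. mat N N (\<lambda>(k,l). \<Sum>j<m. complex_of_real (r j s) * h j $$ (k,l))) U})"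

end

theory Submission
  imports Defs
begin


section \<open>Digits\<close>

definition enc :: "nat \<Rightarrow> nat \<Rightarrow> (nat \<Rightarrow> nat) \<Rightarrow> nat" where
  "enc d n f = (\<Sum>j<n. f j * d ^ j)"

lemma enc_cong: "(\<And>j. j < n \<Longrightarrow> f j = g j) \<Longrightarrow> enc d n f = enc d n g"
  unfolding enc_def by (rule sum.cong) auto

lemma enc_Suc: "enc d (Suc n) f = enc d n f + f n * d ^ n"
  unfolding enc_def by simp

lemma enc_less: assumes "0 < d" "\<And>j. j < n \<Longrightarrow> f j < d" shows "enc d n f < d ^ n"
  using assms(2)
proof (induction n)
  case 0 then show ?case by (simp add: enc_def)
next
  case (Suc n)
  have a: "enc d n f < d ^ n" using Suc by auto
  have b: "f n \<le> d - 1" using Suc by fastforce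
  have "enc d n f + f n * d ^ n < d ^ n + (d - 1) * d ^ n"
    using a b mult_le_mono1 by (meson add_less_le_mono)
  also have "\<dots> = d ^ Suc n" using assms(1)
    by (metis Suc_diff_1 mult.commute mult_Suc power_Suc)
  finally show ?case by (simp add: enc_Suc)
qed

lemma qdigit_add_high: assumes "0 < d" "j < n" shows "qdigit d (x + y * d ^ n) j = qdigit d x j"
proof -
  have "d ^ n = d ^ (n - j - 1 + 1 + j)" using assms by simp
  then have e: "y * d ^ n = (y * d ^ (n - j - 1) * d) * d ^ j"
    by (simp only: power_add power_one_right mult.assoc)
  have "(x + y * d ^ n) div d ^ j = x div d ^ j + y * d ^ (n - j - 1) * d"
    unfolding e using assms by simp
  then show ?thesis unfolding qdigit_def by simp
qed

lemma qdigit_top: assumes "0 < d" "x < d ^ n" "y < d" shows "qdigit d (x + y * d ^ n) n = y"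
  using assms unfolding qdigit_def by simp

lemma qdigit_enc: assumes "0 < d" "\<And>j. j < n \<Longrightarrow> f j < d" "j < n"
  shows "qdigit d (enc d n f) j = f j"
  using assms(2,3)
proof (induction n arbitrary: j)
  case 0 then show ?case by simp
next
  case (Suc n)
  show ?case
  proof (cases "j < n")
    case True
    then show ?thesis unfolding enc_Suc using Suc qdigit_add_high[OF assms(1) True] by auto
  next
    case False
    then have "j = n" using Suc by auto
    then show ?thesis unfolding enc_Suc using Suc qdigit_top[OF assms(1) enc_less[OF assms(1)]] by auto
  qed
qed

lemma qdigit_less: "0 < d \<Longrightarrow> qdigit d k j < d"
  unfolding qdigit_def by simp

lemma enc_qdigit: "enc d n (qdigit d k) = k mod d ^ n"
proof (induction n)
  case 0 then show ?case by (simp add: enc_def)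
next
  case (Suc n)
  have "k mod (d ^ n * d) = d ^ n * (k div d ^ n mod d) + k mod d ^ n" by (rule mod_mult2_eq)
  then show ?case using Suc by (simp add: enc_Suc qdigit_def mult.commute)
qed

lemma qdigit_inj: assumes "k < d ^ n" "k' < d ^ n" "\<And>j. j < n \<Longrightarrow> qdigit d k j = qdigit d k' j"
  shows "k = k'"
proof -
  have "enc d n (qdigit d k) = enc d n (qdigit d k')" using assms(3) by (rule enc_cong)
  then show ?thesis using assms(1,2) by (simp add: enc_qdigit)
qed

definition upd :: "nat \<Rightarrow> nat \<Rightarrow> nat \<Rightarrow> nat \<Rightarrow> nat \<Rightarrow> nat" where
  "upd d n k i t = enc d n (\<lambda>j. if j = i then t else qdigit d k j)"

lemma upd_less: "0 < d \<Longrightarrow> t < d \<Longrightarrow> upd d n k i t < d ^ n"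
  unfolding upd_def by (rule enc_less) (auto simp: qdigit_less)

lemma qdigit_upd: "0 < d \<Longrightarrow> t < d \<Longrightarrow> j < n \<Longrightarrow>
   qdigit d (upd d n k i t) j = (if j = i then t else qdigit d k j)"
  unfolding upd_def by (rule qdigit_enc) (auto simp: qdigit_less)

lemma upd_iff: assumes "0 < d" "t < d" "i < n" "m < d ^ n"
  shows "(qdigit d m i = t \<and> (\<forall>j<n. j \<noteq> i \<longrightarrow> qdigit d m j = qdigit d k j)) \<longleftrightarrow> m = upd d n k i t"
proof
  assume a: "qdigit d m i = t \<and> (\<forall>j<n. j \<noteq> i \<longrightarrow> qdigit d m j = qdigit d k j)"
  show "m = upd d n k i t"
    by (rule qdigit_inj[of _ d n]) (use assms a upd_less qdigit_upd in auto)
next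
  assume "m = upd d n k i t"
  then show "qdigit d m i = t \<and> (\<forall>j<n. j \<noteq> i \<longrightarrow> qdigit d m j = qdigit d k j)"
    using assms qdigit_upd by auto
qed

lemma upd_self: assumes "0 < d" "i < n" "k < d ^ n" shows "upd d n k i (qdigit d k i) = k"
  by (rule qdigit_inj[of _ d n]) (use assms upd_less qdigit_upd qdigit_less in auto)

lemma upd_upd: assumes "0 < d" "i < n" "t < d" "c < d" shows "upd d n (upd d n k i t) i c = upd d n k i c"
  by (rule qdigit_inj[of _ d n]) (use assms upd_less qdigit_upd qdigit_less in auto)


section \<open>Factorization over Vn\<close>

abbreviation D2 :: "nat \<Rightarrow> (nat \<times> nat) set" where "D2 d \<equiv> {..<d} \<times> {..<d}"

lemma Vn_0: "Vn d 0 = {\<lambda>_. (0,0)}"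
  unfolding Vn_def by auto

lemma Vn_Suc: "Vn d (Suc n) = (\<lambda>(a,x). a(n := x)) ` (Vn d n \<times> D2 d)"
proof (intro equalityI subsetI)
  fix b assume b: "b \<in> Vn d (Suc n)"
  have "b(n := (0,0)) \<in> Vn d n" "b n \<in> D2 d" using b unfolding Vn_def by (auto simp: less_Suc_eq mem_Times_iff)
  moreover have "b = (b(n := (0,0)))(n := b n)" by simp
  ultimately show "b \<in> (\<lambda>(a,x). a(n := x)) ` (Vn d n \<times> D2 d)"
    by (metis (no_types, lifting) SigmaI case_prod_conv image_eqI)
next
  fix b assume "b \<in> (\<lambda>(a,x). a(n := x)) ` (Vn d n \<times> D2 d)"
  then show "b \<in> Vn d (Suc n)" unfolding Vn_def by (auto simp: less_Suc_eq)
qed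

lemma Vn_inj: "inj_on (\<lambda>(a,x). a(n := x)) (Vn d n \<times> D2 d)"
proof (rule inj_onI, clarsimp)
  fix a x y b u v
  assume a: "a \<in> Vn d n" and b: "b \<in> Vn d n" and e: "a(n := (x, y)) = b(n := (u, v))"
  have 1: "(x,y) = (u,v)" using fun_cong[OF e, of n] by simp
  have "a = b"
  proof
    fix j show "a j = b j"
    proof (cases "j = n")
      case True then show ?thesis using a b unfolding Vn_def by auto
    next
      case False then show ?thesis using fun_cong[OF e, of j] by simp
    qed
  qed
  then show "a = b \<and> x = u \<and> y = v" using 1 by simp
qed

lemma finite_Vn: "finite (Vn d n)"
  by (induction n) (auto simp: Vn_0 Vn_Suc)

lemma Vn_prod_sum: "(\<Sum>a\<in>Vn d n. \<Prod>j<n. F j (a j)) = (\<Prod>j<n. \<Sum>x\<in>D2 d. (F j x :: 'a :: comm_semiring_1))"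
proof (induction n)
  case 0 then show ?case by (simp add: Vn_0)
next
  case (Suc n)
  have "(\<Sum>a\<in>Vn d (Suc n). \<Prod>j<Suc n. F j (a j)) =
        (\<Sum>p\<in>Vn d n \<times> D2 d. \<Prod>j<Suc n. F j (((\<lambda>(a,x). a(n := x)) p) j))"
    unfolding Vn_Suc by (rule sum.reindex[OF Vn_inj, unfolded comp_def])
  also have "\<dots> = (\<Sum>p\<in>Vn d n \<times> D2 d. (\<Prod>j<n. F j (fst p j)) * F n (snd p))"
    by (rule sum.cong) (auto intro!: prod.cong)
  also have "\<dots> = (\<Sum>a\<in>Vn d n. \<Sum>x\<in>D2 d. (\<Prod>j<n. F j (a j)) * F n x)"
    unfolding sum.cartesian_product by (simp add: case_prod_beta)
  also have "\<dots> = (\<Sum>a\<in>Vn d n. \<Prod>j<n. F j (a j)) * (\<Sum>x\<in>D2 d. F n x)"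
    by (simp add: sum_product)
  finally show ?case using Suc by simp
qed



lemma mod_lt2: "(a::nat) < 2 * d \<Longrightarrow> a mod d = (if a < d then a else a - d)"
  by (metis le_mod_geq less_diff_conv2 linorder_not_le mod_less mult_2)

lemma count_mod: fixes c d r :: nat assumes "c < d" "r < d"
  shows "{s \<in> {..<d}. (c + s) mod d = r} = {(r + d - c) mod d}"
proof -
  have 1: "(c + s) mod d = r \<longleftrightarrow> s = (r + d - c) mod d" if "s < d" for s :: nat
    using assms that mod_lt2[of "c + s" d] mod_lt2[of "r + d - c" d] by auto
  have 2: "(r + d - c) mod d < d" using assms by simp
  show ?thesis using 1 2 by auto
qed

lemma sum_count_mod: fixes c d r :: nat assumes "c < d" "r < d"
  shows "(\<Sum>s<d. if (c + s) mod d = r then f s else 0) = f ((r + d - c) mod d)"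
proof -
  have "(\<Sum>s<d. if (c + s) mod d = r then f s else 0) = (\<Sum>s\<in>{s \<in> {..<d}. (c + s) mod d = r}. f s)"
    using sum.inter_filter[of "{..<d}" f "\<lambda>s. (c + s) mod d = r"] by simp
  then show ?thesis using count_mod[OF assms] by simp
qed

definition ee :: "nat \<Rightarrow> nat \<Rightarrow> complex" where
  "ee d x = exp (2 * pi * \<i> * of_nat x / of_nat d)"

lemma p1_eq: "pauli1_entry d (s,t) r c = (if r = (c + s) mod d then ee d (t * c) else 0)"
  unfolding pauli1_entry_def ee_def by simp

lemma ee_prod: "cnj (ee d (t * c)) * ee d (t * c') = exp (of_nat t * (2 * pi * \<i> * (of_int (int c' - int c)) / of_nat d))"
proof -
  have "cnj (ee d (t * c)) * ee d (t * c') = exp (cnj (2 * pi * \<i> * of_nat (t*c) / of_nat d) + 2 * pi * \<i> * of_nat (t*c') / of_nat d)"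
    unfolding ee_def by (simp only: exp_cnj exp_add)
  also have "cnj (2 * pi * \<i> * of_nat (t*c) / of_nat d) + 2 * pi * \<i> * of_nat (t*c') / of_nat d
      = of_nat t * (2 * pi * \<i> * (of_int (int c' - int c)) / of_nat d)"
    by (simp add: field_simps) (simp add: diff_divide_distrib)
  finally show ?thesis .
qed

lemma geom_zero: assumes "c < d" "c' < d" "c \<noteq> c'"
  shows "(\<Sum>t<d. cnj (ee d (t * c)) * ee d (t * c')) = 0"
proof -
  define w :: complex where "w = 2 * pi * \<i> * (of_int (int c' - int c)) / of_nat d"
  define z where "z = exp w"
  have d0: "0 < d" using assms by simp
  have terms: "cnj (ee d (t * c)) * ee d (t * c') = z ^ t" for t
    unfolding ee_prod z_def w_def by (simp only: exp_of_nat_mult)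
  have zd: "z ^ d = 1"
  proof -
    have "z ^ d = exp (of_nat d * w)" unfolding z_def by (simp add: exp_of_nat_mult)
    also have "of_nat d * w = 2 * pi * \<i> * of_int (int c' - int c)" unfolding w_def using d0 by simp
    also have "exp \<dots> = 1" by (rule exp_eq_1[THEN iffD2]) (auto intro!: exI[of _ "int c' - int c"])
    finally show ?thesis .
  qed
  have z1: "z \<noteq> 1"
  proof
    assume "z = 1"
    then obtain k :: int where k: "Im w = of_int (2 * k) * pi" unfolding z_def exp_eq_1 by blast
    have "Im w = 2 * pi * (of_int (int c' - int c)) / of_nat d" unfolding w_def by simp
    with k have "2 * pi * (of_int (int c' - int c)) / of_nat d = 2 * pi * of_int k" by simp
    then have "2 * pi * (real_of_int (int c' - int c) / real d) = 2 * pi * of_int k" by simp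
    moreover have c: "2 * pi \<noteq> (0::real)" by simp
    ultimately have "real_of_int (int c' - int c) / real d = of_int k" by (metis mult_left_cancel)
    then have "real_of_int (int c' - int c) = of_int k * of_nat d" using d0
      by (simp add: divide_eq_eq)
    then have e: "int c' - int c = k * int d" by (metis of_int_eq_iff of_int_mult of_int_of_nat_eq)
    show False
    proof (cases "k = 0")
      case True then show False using e assms by simp
    next
      case False
      have k1: "1 \<le> \<bar>k\<bar>" using False by (cases "k > 0") auto
      have "\<bar>k * int d\<bar> = \<bar>k\<bar> * int d" by (simp add: abs_mult)
      also have "\<dots> \<ge> 1 * int d" using k1 by (intro mult_right_mono) auto
      finally have "\<bar>k * int d\<bar> \<ge> int d" by simp
      then show False using e assms by simp
    qed
  qed
  have "(\<Sum>t<d. cnj (ee d (t * c)) * ee d (t * c')) = (\<Sum>t<d. z ^ t)" using terms by simp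
  also have "\<dots> = 0" using z1 zd by (simp add: sum_gp_strict)
  finally show ?thesis .
qed

lemma ee_norm: "cnj (ee d x) * ee d x = 1"
proof -
  have "cnj (ee d x) * ee d x = exp (cnj (2 * pi * \<i> * of_nat x / of_nat d) + 2 * pi * \<i> * of_nat x / of_nat d)"
    unfolding ee_def by (simp only: exp_cnj exp_add)
  also have "cnj (2 * pi * \<i> * of_nat x / of_nat d) + 2 * pi * \<i> * of_nat x / of_nat d = 0" by simp
  finally show ?thesis by simp
qed

lemma single_site: assumes "r < d" "c < d" "r' < d" "c' < d"
  shows "(\<Sum>x\<in>D2 d. cnj (pauli1_entry d x r c) * pauli1_entry d x r' c') = (if c = c' \<and> r = r' then of_nat d else 0)"
proof -
  have "(\<Sum>x\<in>D2 d. cnj (pauli1_entry d x r c) * pauli1_entry d x r' c')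
      = (\<Sum>s<d. \<Sum>t<d. cnj (pauli1_entry d (s,t) r c) * pauli1_entry d (s,t) r' c')"
    by (simp add: sum.cartesian_product)
  also have "\<dots> = (\<Sum>s<d. if r = (c + s) mod d \<and> r' = (c' + s) mod d then
          (\<Sum>t<d. cnj (ee d (t * c)) * ee d (t * c')) else 0)"
    by (rule sum.cong) (auto simp: p1_eq)
  also have "\<dots> = (if c = c' \<and> r = r' then of_nat d else 0)"
  proof (cases "c = c'")
    case True
    have "(\<Sum>s<d. if r = (c + s) mod d \<and> r' = (c' + s) mod d then
          (\<Sum>t<d. cnj (ee d (t * c)) * ee d (t * c')) else 0)
        = (\<Sum>s<d. if (c + s) mod d = r then (if r = r' then of_nat d else 0) else 0)"
      using True by (intro sum.cong) (auto simp: ee_norm)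
    also have "\<dots> = (if r = r' then of_nat d else 0)"
      by (rule sum_count_mod[OF assms(2,1)])
    finally show ?thesis using True by simp
  next
    case False
    then show ?thesis by (simp only: geom_zero[OF assms(2,4) False]) simp
  qed
  finally show ?thesis .
qed

lemma single_site0: assumes "r < d" "c < d" "r' < d" "c' < d"
  shows "cnj (pauli1_entry d (0,0) r c) * pauli1_entry d (0,0) r' c' = (if r = c \<and> r' = c' then 1 else 0)"
  using assms unfolding pauli1_entry_def by auto


section \<open>Pauli sums\<close>

definition pe :: "nat \<Rightarrow> nat \<Rightarrow> (nat \<Rightarrow> nat \<times> nat) \<Rightarrow> nat \<Rightarrow> nat \<Rightarrow> complex" where
  "pe d n a l k = (\<Prod>j<n. pauli1_entry d (a j) (qdigit d l j) (qdigit d k j))"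

definition cpa :: "nat \<Rightarrow> nat \<Rightarrow> complex mat \<Rightarrow> (nat \<Rightarrow> nat \<times> nat) \<Rightarrow> complex" where
  "cpa d n X a = mtrace (X * pauli d n a)"

definition Fro :: "nat \<Rightarrow> complex mat \<Rightarrow> complex mat \<Rightarrow> complex" where
  "Fro N X Y = (\<Sum>k<N. \<Sum>l<N. cnj (X $$ (k,l)) * Y $$ (k,l))"

definition Tm :: "nat \<Rightarrow> nat \<Rightarrow> nat \<Rightarrow> complex mat \<Rightarrow> complex mat" where
  "Tm d n i Y = mat (d^n) (d^n) (\<lambda>(k,l). if qdigit d k i = qdigit d l i
       then \<Sum>t<d. Y $$ (upd d n k i t, upd d n l i t) else 0)"

lemma mult_entry: "A \<in> carrier_mat N N \<Longrightarrow> B \<in> carrier_mat N N \<Longrightarrow> k < N \<Longrightarrow> l < N \<Longrightarrow>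
  (A * B) $$ (k,l) = (\<Sum>m<N. A $$ (k,m) * B $$ (m,l))"
  by (simp add: scalar_prod_def atLeast0LessThan)

lemma cpa_expand: assumes "X \<in> carrier_mat (d^n) (d^n)"
  shows "cpa d n X a = (\<Sum>k<d^n. \<Sum>l<d^n. X $$ (k,l) * pe d n a l k)"
proof -
  have P: "pauli d n a \<in> carrier_mat (d^n) (d^n)" unfolding pauli_def by simp
  show ?thesis unfolding cpa_def mtrace_def using assms
    by (auto simp: scalar_prod_def atLeast0LessThan pauli_def pe_def intro!: sum.cong)
qed

lemma prod_if_zero: "finite S \<Longrightarrow> (\<Prod>j\<in>S. if P j then f j else (0::'a::comm_semiring_1)) =
   (if \<forall>j\<in>S. P j then \<Prod>j\<in>S. f j else 0)"
  by (auto intro!: prod.cong prod_zero)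

lemma pauli_sum:
  assumes X: "X \<in> carrier_mat (d^n) (d^n)" and Y: "Y \<in> carrier_mat (d^n) (d^n)"
  shows "(\<Sum>a\<in>Vn d n. (\<Prod>j<n. w j (a j)) * (cnj (cpa d n X a) * cpa d n Y a)) =
    (\<Sum>k<d^n. \<Sum>l<d^n. \<Sum>k'<d^n. \<Sum>l'<d^n. cnj (X $$ (k,l)) * Y $$ (k',l') *
       (\<Prod>j<n. \<Sum>x\<in>D2 d. w j x * (cnj (pauli1_entry d x (qdigit d l j) (qdigit d k j)) *
            pauli1_entry d x (qdigit d l' j) (qdigit d k' j))))"
proof -
  let ?N = "d^n"
  let ?F = "\<lambda>a k l k' l'. cnj (X $$ (k,l)) * Y $$ (k',l') * ((\<Prod>j<n. w j (a j)) * (cnj (pe d n a l k) * pe d n a l' k'))"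
  have 1: "(\<Prod>j<n. w j (a j)) * (cnj (cpa d n X a) * cpa d n Y a) =
     (\<Sum>k<?N. \<Sum>l<?N. \<Sum>k'<?N. \<Sum>l'<?N. ?F a k l k' l')" for a
  proof -
    have "(\<Prod>j<n. w j (a j)) * (cnj (cpa d n X a) * cpa d n Y a) =
      (\<Sum>k<?N. \<Sum>l<?N. (\<Prod>j<n. w j (a j)) * (cnj (X $$ (k,l)) * cnj (pe d n a l k))) *
      (\<Sum>k'<?N. \<Sum>l'<?N. Y $$ (k',l') * pe d n a l' k')"
    proof -
      have A: "(\<Prod>j<n. w j (a j)) * cnj (cpa d n X a) = 
        (\<Sum>k<?N. \<Sum>l<?N. (\<Prod>j<n. w j (a j)) * (cnj (X $$ (k,l)) * cnj (pe d n a l k)))"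
        by (simp add: cpa_expand[OF X] sum_distrib_left)
      have "(\<Prod>j<n. w j (a j)) * (cnj (cpa d n X a) * cpa d n Y a) = 
         ((\<Prod>j<n. w j (a j)) * cnj (cpa d n X a)) * cpa d n Y a" by (simp only: mult.assoc)
      then show ?thesis unfolding A cpa_expand[OF Y] .
    qed
    also have "\<dots> = (\<Sum>k<?N. \<Sum>l<?N. \<Sum>k'<?N. \<Sum>l'<?N. 
       ((\<Prod>j<n. w j (a j)) * (cnj (X $$ (k,l)) * cnj (pe d n a l k))) * (Y $$ (k',l') * pe d n a l' k'))"
      apply (simp only: sum_distrib_right)
      apply (simp only: sum_distrib_left)
      done
    also have "\<dots> = (\<Sum>k<?N. \<Sum>l<?N. \<Sum>k'<?N. \<Sum>l'<?N. ?F a k l k' l')"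
      by (intro sum.cong refl) (simp add: mult_ac)
    finally show ?thesis .
  qed
  have "(\<Sum>a\<in>Vn d n. (\<Prod>j<n. w j (a j)) * (cnj (cpa d n X a) * cpa d n Y a)) =
     (\<Sum>a\<in>Vn d n. \<Sum>k<?N. \<Sum>l<?N. \<Sum>k'<?N. \<Sum>l'<?N. ?F a k l k' l')"
    using 1 by simp
  also have "\<dots> = (\<Sum>k<?N. \<Sum>a\<in>Vn d n. \<Sum>l<?N. \<Sum>k'<?N. \<Sum>l'<?N. ?F a k l k' l')"
    by (rule sum.swap)
  also have "\<dots> = (\<Sum>k<?N. \<Sum>l<?N. \<Sum>a\<in>Vn d n. \<Sum>k'<?N. \<Sum>l'<?N. ?F a k l k' l')"
    by (rule sum.cong[OF refl], rule sum.swap)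
  also have "\<dots> = (\<Sum>k<?N. \<Sum>l<?N. \<Sum>k'<?N. \<Sum>a\<in>Vn d n. \<Sum>l'<?N. ?F a k l k' l')"
    by (rule sum.cong[OF refl], rule sum.cong[OF refl], rule sum.swap)
  also have "\<dots> = (\<Sum>k<?N. \<Sum>l<?N. \<Sum>k'<?N. \<Sum>l'<?N. \<Sum>a\<in>Vn d n. ?F a k l k' l')"
    by (rule sum.cong[OF refl], rule sum.cong[OF refl], rule sum.cong[OF refl], rule sum.swap)
  also have "\<dots> = (\<Sum>k<d^n. \<Sum>l<d^n. \<Sum>k'<d^n. \<Sum>l'<d^n. cnj (X $$ (k,l)) * Y $$ (k',l') *
       (\<Prod>j<n. \<Sum>x\<in>D2 d. w j x * (cnj (pauli1_entry d x (qdigit d l j) (qdigit d k j)) *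
            pauli1_entry d x (qdigit d l' j) (qdigit d k' j))))"
  proof (intro sum.cong refl)
    fix k l k' l'
    have "(\<Sum>a\<in>Vn d n. ?F a k l k' l') = cnj (X $$ (k,l)) * Y $$ (k',l') *
       (\<Sum>a\<in>Vn d n. \<Prod>j<n. w j (a j) * (cnj (pauli1_entry d (a j) (qdigit d l j) (qdigit d k j)) *
            pauli1_entry d (a j) (qdigit d l' j) (qdigit d k' j)))"
      by (simp add: sum_distrib_left pe_def prod.distrib)
    also have "\<dots> = cnj (X $$ (k,l)) * Y $$ (k',l') *
       (\<Prod>j<n. \<Sum>x\<in>D2 d. w j x * (cnj (pauli1_entry d x (qdigit d l j) (qdigit d k j)) *
            pauli1_entry d x (qdigit d l' j) (qdigit d k' j)))"
      by (subst Vn_prod_sum) (rule refl)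
    finally show "(\<Sum>a\<in>Vn d n. ?F a k l k' l') = \<dots>" .
  qed
  finally show ?thesis .
qed



lemma if_conj0: "(if A \<and> B then x else 0) = (if A then if B then x else 0 else 0)" by simp

lemma sum_if_const: "(\<Sum>x\<in>A. if P then f x else 0) = (if P then sum f A else 0)" by auto

lemma sum2_delta: "k < (N::nat) \<Longrightarrow> l < N \<Longrightarrow> (\<Sum>k'<N. \<Sum>l'<N. f k' l' * (if k' = k \<and> l' = l then c else 0)) = (f k l * (c::complex))"
  by (simp add: if_distrib[of "\<lambda>x. f _ _ * x"] if_conj0 sum_if_const sum.delta sum.delta' cong: if_cong)



lemma digit_delta: assumes d: "2 \<le> d" and k: "k < d^n" "l < d^n" "k' < d^n" "l' < d^n"
  shows "(\<Prod>j<n. \<Sum>x\<in>D2 d. 1 * (cnj (pauli1_entry d x (qdigit d l j) (qdigit d k j)) *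
            pauli1_entry d x (qdigit d l' j) (qdigit d k' j))) = (if k' = k \<and> l' = l then of_nat (d^n) else 0)"
proof -
  have d0: "0 < d" using d by simp
  have "(\<Prod>j<n. \<Sum>x\<in>D2 d. 1 * (cnj (pauli1_entry d x (qdigit d l j) (qdigit d k j)) *
            pauli1_entry d x (qdigit d l' j) (qdigit d k' j))) =
        (\<Prod>j<n. if qdigit d k j = qdigit d k' j \<and> qdigit d l j = qdigit d l' j then of_nat d else 0)"
    by (intro prod.cong refl) (simp add: single_site qdigit_less[OF d0])
  also have "\<dots> = (if \<forall>j\<in>{..<n}. qdigit d k j = qdigit d k' j \<and> qdigit d l j = qdigit d l' j then (\<Prod>j<n. of_nat d) else 0)"
    by (rule prod_if_zero) simp
  also have "\<dots> = (if k' = k \<and> l' = l then of_nat (d^n) else 0)"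
  proof -
    have "(\<forall>j\<in>{..<n}. qdigit d k j = qdigit d k' j \<and> qdigit d l j = qdigit d l' j) \<longleftrightarrow> k' = k \<and> l' = l"
      using qdigit_inj[of k d n k'] qdigit_inj[of l d n l'] k by auto
    then show ?thesis by simp
  qed
  finally show ?thesis .
qed

lemma parseval: assumes d: "2 \<le> d" and X: "X \<in> carrier_mat (d^n) (d^n)" and Y: "Y \<in> carrier_mat (d^n) (d^n)"
  shows "(\<Sum>a\<in>Vn d n. cnj (cpa d n X a) * cpa d n Y a) = of_nat (d^n) * Fro (d^n) X Y"
proof -
  have "(\<Sum>a\<in>Vn d n. cnj (cpa d n X a) * cpa d n Y a) =
     (\<Sum>a\<in>Vn d n. (\<Prod>j<n. (\<lambda>j x. 1::complex) j (a j)) * (cnj (cpa d n X a) * cpa d n Y a))" by simp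
  also have "\<dots> = (\<Sum>k<d^n. \<Sum>l<d^n. \<Sum>k'<d^n. \<Sum>l'<d^n. cnj (X $$ (k,l)) * Y $$ (k',l') *
       (\<Prod>j<n. \<Sum>x\<in>D2 d. 1 * (cnj (pauli1_entry d x (qdigit d l j) (qdigit d k j)) *
            pauli1_entry d x (qdigit d l' j) (qdigit d k' j))))" by (rule pauli_sum[OF X Y])
  also have "\<dots> = (\<Sum>k<d^n. \<Sum>l<d^n. \<Sum>k'<d^n. \<Sum>l'<d^n. cnj (X $$ (k,l)) * Y $$ (k',l') *
       (if k' = k \<and> l' = l then of_nat (d^n) else 0))"
    by (intro sum.cong refl) (subst digit_delta[OF d], simp_all)
  also have "\<dots> = (\<Sum>k<d^n. \<Sum>l<d^n. cnj (X $$ (k,l)) * Y $$ (k,l) * of_nat (d^n))"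
    by (intro sum.cong refl) (simp add: sum2_delta[where f="\<lambda>k' l'. cnj (X $$ (_,_)) * Y $$ (k',l')"])
  also have "\<dots> = of_nat (d^n) * Fro (d^n) X Y"
    unfolding Fro_def by (simp add: sum_distrib_left mult_ac)
  finally show ?thesis .
qed

definition wz :: "nat \<Rightarrow> nat \<Rightarrow> nat \<times> nat \<Rightarrow> complex" where
  "wz i j x = (if j = i then (if x = (0,0) then 1 else 0) else 1)"

lemma wz_prod: "i < n \<Longrightarrow> (\<Prod>j<n. wz i j (a j)) = (if a i = (0,0) then 1 else 0)"
  by (simp add: prod.remove[of "{..<n}" i] wz_def)

lemma digit_delta0: assumes d: "2 \<le> d" and i: "i < n" and k: "k < d^n" "l < d^n" "k' < d^n" "l' < d^n"
  shows "(\<Prod>j<n. \<Sum>x\<in>D2 d. wz i j x * (cnj (pauli1_entry d x (qdigit d l j) (qdigit d k j)) *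
            pauli1_entry d x (qdigit d l' j) (qdigit d k' j))) =
     (if qdigit d l i = qdigit d k i \<and> qdigit d l' i = qdigit d k' i \<and>
         (\<forall>j<n. j \<noteq> i \<longrightarrow> qdigit d k j = qdigit d k' j \<and> qdigit d l j = qdigit d l' j)
      then of_nat (d^(n-1)) else 0)"
proof -
  have d0: "0 < d" using d by simp
  let ?P = "\<lambda>j. if j = i then qdigit d l i = qdigit d k i \<and> qdigit d l' i = qdigit d k' i
       else qdigit d k j = qdigit d k' j \<and> qdigit d l j = qdigit d l' j"
  let ?f = "\<lambda>j. if j = i then 1 else (of_nat d :: complex)"
  have "(\<Prod>j<n. \<Sum>x\<in>D2 d. wz i j x * (cnj (pauli1_entry d x (qdigit d l j) (qdigit d k j)) *
            pauli1_entry d x (qdigit d l' j) (qdigit d k' j))) = (\<Prod>j<n. if ?P j then ?f j else 0)"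
  proof (intro prod.cong refl)
    fix j assume "j \<in> {..<n}"
    show "(\<Sum>x\<in>D2 d. wz i j x * (cnj (pauli1_entry d x (qdigit d l j) (qdigit d k j)) *
            pauli1_entry d x (qdigit d l' j) (qdigit d k' j))) = (if ?P j then ?f j else 0)"
    proof (cases "j = i")
      case True
      have "(\<Sum>x\<in>D2 d. wz i j x * (cnj (pauli1_entry d x (qdigit d l j) (qdigit d k j)) *
            pauli1_entry d x (qdigit d l' j) (qdigit d k' j))) =
          (\<Sum>x\<in>D2 d. if x = (0,0) then cnj (pauli1_entry d (0,0) (qdigit d l j) (qdigit d k j)) *
            pauli1_entry d (0,0) (qdigit d l' j) (qdigit d k' j) else 0)"
        using True by (intro sum.cong refl) (auto simp: wz_def)
      also have "\<dots> = cnj (pauli1_entry d (0,0) (qdigit d l j) (qdigit d k j)) *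
            pauli1_entry d (0,0) (qdigit d l' j) (qdigit d k' j)"
        using d0 by simp
      finally show ?thesis using True by (simp add: single_site0 qdigit_less[OF d0])
    next
      case False
      then show ?thesis by (simp add: wz_def single_site qdigit_less[OF d0])
    qed
  qed
  also have "\<dots> = (if \<forall>j\<in>{..<n}. ?P j then \<Prod>j<n. ?f j else 0)"
    by (rule prod_if_zero) simp
  also have "(\<Prod>j<n. ?f j) = of_nat (d^(n-1))"
    using i by (simp add: prod.remove[of "{..<n}" i])
  also have "(\<forall>j\<in>{..<n}. ?P j) \<longleftrightarrow> (qdigit d l i = qdigit d k i \<and> qdigit d l' i = qdigit d k' i \<and>
         (\<forall>j<n. j \<noteq> i \<longrightarrow> qdigit d k j = qdigit d k' j \<and> qdigit d l j = qdigit d l' j))"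
    using i by auto
  finally show ?thesis .
qed


lemma sum2_delta': "k < (N::nat) \<Longrightarrow> l < N \<Longrightarrow> (\<Sum>k'<N. \<Sum>l'<N. if k' = k \<and> l' = l then (g k' l' :: complex) else 0) = g k l"
  by (simp add: if_conj0 sum_if_const sum.delta sum.delta' cong: if_cong)

lemma R1: assumes d0: "0 < d" and i: "i < n" and k: "k < d^n" and l: "l < d^n"
  shows "(\<Sum>k'<d^n. \<Sum>l'<d^n. f k' l' * (if qdigit d l i = qdigit d k i \<and> qdigit d l' i = qdigit d k' i \<and>
         (\<forall>j<n. j \<noteq> i \<longrightarrow> qdigit d k j = qdigit d k' j \<and> qdigit d l j = qdigit d l' j) then c else 0))
   = (if qdigit d k i = qdigit d l i then c * (\<Sum>t<d. f (upd d n k i t) (upd d n l i t)) else (0::complex))"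
proof (cases "qdigit d k i = qdigit d l i")
  case False then show ?thesis by auto
next
  case True
  let ?C = "\<lambda>k' l'. qdigit d l' i = qdigit d k' i \<and>
         (\<forall>j<n. j \<noteq> i \<longrightarrow> qdigit d k j = qdigit d k' j \<and> qdigit d l j = qdigit d l' j)"
  have pw: "f k' l' * (if ?C k' l' then c else 0) =
     (\<Sum>t<d. if k' = upd d n k i t \<and> l' = upd d n l i t then c * f k' l' else 0)"
    if k': "k' < d^n" and l': "l' < d^n" for k' l'
  proof (cases "?C k' l'")
    case C: True
    let ?t0 = "qdigit d k' i"
    have t0: "?t0 < d" using qdigit_less[OF d0] .
    have "k' = upd d n k i t \<and> l' = upd d n l i t \<longleftrightarrow> t = ?t0" if "t < d" for t
    proof
      assume "k' = upd d n k i t \<and> l' = upd d n l i t"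
      then show "t = ?t0" using qdigit_upd[OF d0 that i] by simp
    next
      assume tt: "t = ?t0"
      have "k' = upd d n k i t" using upd_iff[OF d0 that i k', of k] C tt by auto
      moreover have "l' = upd d n l i t" using upd_iff[OF d0 that i l', of l] C tt by auto
      ultimately show "k' = upd d n k i t \<and> l' = upd d n l i t" by simp
    qed
    then have "(\<Sum>t<d. if k' = upd d n k i t \<and> l' = upd d n l i t then c * f k' l' else 0) =
        (\<Sum>t<d. if t = ?t0 then c * f k' l' else 0)" by (intro sum.cong) auto
    also have "\<dots> = c * f k' l'" using t0 by simp
    finally show ?thesis using C by simp
  next
    case C: False
    have "\<not> (k' = upd d n k i t \<and> l' = upd d n l i t)" if "t < d" for t
      using C qdigit_upd[OF d0 that i] qdigit_upd[OF d0 that, of _ n] True by auto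
    then have s0: "(\<Sum>t<d. if k' = upd d n k i t \<and> l' = upd d n l i t then c * f k' l' else 0) = 0"
      by (intro sum.neutral) auto
    have z: "(if ?C k' l' then c else 0) = 0" using C by (rule if_not_P)
    show ?thesis unfolding z s0 by simp
  qed
  have "(\<Sum>k'<d^n. \<Sum>l'<d^n. f k' l' * (if qdigit d l i = qdigit d k i \<and> ?C k' l' then c else 0)) =
      (\<Sum>k'<d^n. \<Sum>l'<d^n. \<Sum>t<d. if k' = upd d n k i t \<and> l' = upd d n l i t then c * f k' l' else 0)"
    using True pw by (intro sum.cong refl) auto
  also have "\<dots> = (\<Sum>k'<d^n. \<Sum>t<d. \<Sum>l'<d^n. if k' = upd d n k i t \<and> l' = upd d n l i t then c * f k' l' else 0)"
    by (rule sum.cong[OF refl], rule sum.swap)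
  also have "\<dots> = (\<Sum>t<d. \<Sum>k'<d^n. \<Sum>l'<d^n. if k' = upd d n k i t \<and> l' = upd d n l i t then c * f k' l' else 0)"
    by (rule sum.swap)
  also have "\<dots> = (\<Sum>t<d. c * f (upd d n k i t) (upd d n l i t))"
    by (intro sum.cong refl) (simp add: sum2_delta' upd_less[OF d0])
  finally show ?thesis using True by (simp add: sum_distrib_left)
qed

lemma psi0_sum: assumes d: "2 \<le> d" and i: "i < n" and X: "X \<in> carrier_mat (d^n) (d^n)" and Y: "Y \<in> carrier_mat (d^n) (d^n)"
  shows "(\<Sum>a\<in>Vn d n. if a i = (0,0) then cnj (cpa d n X a) * cpa d n Y a else 0) =
     of_nat (d^(n-1)) * Fro (d^n) X (Tm d n i Y)"
proof -
  have d0: "0 < d" using d by simp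
  have "(\<Sum>a\<in>Vn d n. if a i = (0,0) then cnj (cpa d n X a) * cpa d n Y a else 0) =
     (\<Sum>a\<in>Vn d n. (\<Prod>j<n. wz i j (a j)) * (cnj (cpa d n X a) * cpa d n Y a))"
    by (intro sum.cong refl) (auto simp: wz_prod[OF i])
  also have "\<dots> = (\<Sum>k<d^n. \<Sum>l<d^n. \<Sum>k'<d^n. \<Sum>l'<d^n. cnj (X $$ (k,l)) * Y $$ (k',l') *
       (\<Prod>j<n. \<Sum>x\<in>D2 d. wz i j x * (cnj (pauli1_entry d x (qdigit d l j) (qdigit d k j)) *
            pauli1_entry d x (qdigit d l' j) (qdigit d k' j))))" by (rule pauli_sum[OF X Y])
  also have "\<dots> = (\<Sum>k<d^n. \<Sum>l<d^n. \<Sum>k'<d^n. \<Sum>l'<d^n. cnj (X $$ (k,l)) * Y $$ (k',l') *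
       (if qdigit d l i = qdigit d k i \<and> qdigit d l' i = qdigit d k' i \<and>
         (\<forall>j<n. j \<noteq> i \<longrightarrow> qdigit d k j = qdigit d k' j \<and> qdigit d l j = qdigit d l' j)
      then of_nat (d^(n-1)) else 0))"
    by (intro sum.cong refl) (subst digit_delta0[OF d i], simp_all)
  also have "\<dots> = (\<Sum>k<d^n. \<Sum>l<d^n. cnj (X $$ (k,l)) * (if qdigit d k i = qdigit d l i then
         of_nat (d^(n-1)) * (\<Sum>t<d. Y $$ (upd d n k i t, upd d n l i t)) else 0))"
  proof (intro sum.cong refl)
    fix k l assume k: "k \<in> {..<d^n}" and l: "l \<in> {..<d^n}"
    have "(\<Sum>k'<d^n. \<Sum>l'<d^n. cnj (X $$ (k,l)) * Y $$ (k',l') *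
       (if qdigit d l i = qdigit d k i \<and> qdigit d l' i = qdigit d k' i \<and>
         (\<forall>j<n. j \<noteq> i \<longrightarrow> qdigit d k j = qdigit d k' j \<and> qdigit d l j = qdigit d l' j)
      then of_nat (d^(n-1)) else 0)) = cnj (X $$ (k,l)) * (\<Sum>k'<d^n. \<Sum>l'<d^n. Y $$ (k',l') *
       (if qdigit d l i = qdigit d k i \<and> qdigit d l' i = qdigit d k' i \<and>
         (\<forall>j<n. j \<noteq> i \<longrightarrow> qdigit d k j = qdigit d k' j \<and> qdigit d l j = qdigit d l' j)
      then of_nat (d^(n-1)) else 0))" by (simp add: sum_distrib_left mult.assoc)
    also have "\<dots> = cnj (X $$ (k,l)) * (if qdigit d k i = qdigit d l i then
         of_nat (d^(n-1)) * (\<Sum>t<d. Y $$ (upd d n k i t, upd d n l i t)) else 0)"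
      using k l by (subst R1[OF d0 i]) auto
    finally show "(\<Sum>k'<d^n. \<Sum>l'<d^n. cnj (X $$ (k,l)) * Y $$ (k',l') *
       (if qdigit d l i = qdigit d k i \<and> qdigit d l' i = qdigit d k' i \<and>
         (\<forall>j<n. j \<noteq> i \<longrightarrow> qdigit d k j = qdigit d k' j \<and> qdigit d l j = qdigit d l' j)
      then of_nat (d^(n-1)) else 0)) = cnj (X $$ (k,l)) * (if qdigit d k i = qdigit d l i then
         of_nat (d^(n-1)) * (\<Sum>t<d. Y $$ (upd d n k i t, upd d n l i t)) else 0)" .
  qed
  also have "\<dots> = of_nat (d^(n-1)) * Fro (d^n) X (Tm d n i Y)"
    unfolding Fro_def Tm_def by (auto simp: sum_distrib_left mult_ac intro!: sum.cong)
  finally show ?thesis .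
qed



definition offsupp :: "nat \<Rightarrow> nat \<Rightarrow> complex mat \<Rightarrow> nat \<Rightarrow> bool" where
  "offsupp d n h i \<longleftrightarrow>
     (\<forall>k<d^n. \<forall>m<d^n. h $$ (k,m) \<noteq> 0 \<longrightarrow> qdigit d k i = qdigit d m i) \<and>
     (\<forall>k<d^n. \<forall>m<d^n. \<forall>t<d. qdigit d k i = qdigit d m i \<longrightarrow>
         h $$ (upd d n k i t, upd d n m i t) = h $$ (k,m))"

lemma offsupp_from:
  assumes d0: "0 < d" and i: "i < n" "i \<notin> S" and S: "S \<subseteq> {..<n}"
    and h: "\<forall>k<d^n. \<forall>l<d^n.
           h $$ (k,l) = (if (\<forall>i<n. i \<notin> S \<longrightarrow> qdigit d k i = qdigit d l i)
                         then g (\<lambda>i. if i \<in> S then qdigit d k i else 0)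
                                (\<lambda>i. if i \<in> S then qdigit d l i else 0)
                         else 0)"
  shows "offsupp d n h i"
  unfolding offsupp_def
proof (intro conjI allI impI)
  fix k m assume k: "k < d^n" and m: "m < d^n" and nz: "h $$ (k,m) \<noteq> 0"
  then show "qdigit d k i = qdigit d m i" using h i by (auto split: if_splits)
next
  fix k m t assume k: "k < d^n" and m: "m < d^n" and t: "t < d" and e: "qdigit d k i = qdigit d m i"
  have uk: "upd d n k i t < d^n" "upd d n m i t < d^n" using upd_less[OF d0 t] by auto
  have c: "(\<forall>j<n. j \<notin> S \<longrightarrow> qdigit d (upd d n k i t) j = qdigit d (upd d n m i t) j) \<longleftrightarrow>
        (\<forall>j<n. j \<notin> S \<longrightarrow> qdigit d k j = qdigit d m j)"
  proof -
    have "qdigit d (upd d n k i t) j = qdigit d (upd d n m i t) j \<longleftrightarrow> qdigit d k j = qdigit d m j" if "j < n" for j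
      using e qdigit_upd[OF d0 t that] by auto
    then show ?thesis by auto
  qed
  have g1: "(\<lambda>j. if j \<in> S then qdigit d (upd d n x i t) j else 0) = (\<lambda>j. if j \<in> S then qdigit d x j else 0)" for x
  proof
    fix j show "(if j \<in> S then qdigit d (upd d n x i t) j else 0) = (if j \<in> S then qdigit d x j else 0)"
      using i S qdigit_upd[OF d0 t, of j n x i] by auto
  qed
  have 1: "h $$ (upd d n k i t, upd d n m i t) = (if (\<forall>j<n. j \<notin> S \<longrightarrow> qdigit d (upd d n k i t) j = qdigit d (upd d n m i t) j)
        then g (\<lambda>j. if j \<in> S then qdigit d (upd d n k i t) j else 0) (\<lambda>j. if j \<in> S then qdigit d (upd d n m i t) j else 0) else 0)"
    using h uk by blast
  have 2: "h $$ (k, m) = (if (\<forall>j<n. j \<notin> S \<longrightarrow> qdigit d k j = qdigit d m j)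
        then g (\<lambda>j. if j \<in> S then qdigit d k j else 0) (\<lambda>j. if j \<in> S then qdigit d m j else 0) else 0)"
    using h k m by blast
  show "h $$ (upd d n k i t, upd d n m i t) = h $$ (k,m)"
    unfolding 1 2 c g1 ..
qed

lemma row_col: "A \<in> carrier_mat N N \<Longrightarrow> B \<in> carrier_mat N N \<Longrightarrow> k < N \<Longrightarrow> l < N \<Longrightarrow>
  row A k \<bullet> col B l = (\<Sum>m<N. A $$ (k,m) * B $$ (m,l))"
  by (simp add: scalar_prod_def atLeast0LessThan)

lemma herm_entry: assumes "hermitian_op h" "h \<in> carrier_mat N N" "k < N" "m < N"
  shows "cnj (h $$ (k,m)) = h $$ (m,k)"
proof -
  have "adj h $$ (m,k) = cnj (h $$ (k,m))" using assms(2-4) unfolding adj_def by simp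
  then show ?thesis using assms(1) unfolding hermitian_op_def by simp
qed

lemma Tm_carrier: "Tm d n i Y \<in> carrier_mat (d^n) (d^n)"
  unfolding Tm_def by simp

lemma Tm_entry: "k < d^n \<Longrightarrow> l < d^n \<Longrightarrow> Tm d n i Y $$ (k,l) =
   (if qdigit d k i = qdigit d l i then \<Sum>t<d. Y $$ (upd d n k i t, upd d n l i t) else 0)"
  unfolding Tm_def by simp

lemma Fro_swap: "Fro N Y X = cnj (Fro N X Y)"
  unfolding Fro_def by (simp add: mult.commute)

lemma Fro_left: assumes "hermitian_op h" "h \<in> carrier_mat N N" "X \<in> carrier_mat N N" "Y \<in> carrier_mat N N"
  shows "Fro N X (h * Y) = Fro N (h * X) Y"
proof -
  have "Fro N X (h * Y) = (\<Sum>k<N. \<Sum>l<N. \<Sum>m<N. cnj (X $$ (k,l)) * h $$ (k,m) * Y $$ (m,l))"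
    unfolding Fro_def using assms by (simp add: mult_entry row_col sum_distrib_left mult.assoc)
  also have "\<dots> = (\<Sum>l<N. \<Sum>k<N. \<Sum>m<N. cnj (X $$ (k,l)) * h $$ (k,m) * Y $$ (m,l))"
    by (rule sum.swap)
  also have "\<dots> = (\<Sum>l<N. \<Sum>m<N. \<Sum>k<N. cnj (X $$ (k,l)) * h $$ (k,m) * Y $$ (m,l))"
    by (rule sum.cong[OF refl], rule sum.swap)
  also have "\<dots> = (\<Sum>m<N. \<Sum>l<N. \<Sum>k<N. cnj (X $$ (k,l)) * h $$ (k,m) * Y $$ (m,l))"
    by (rule sum.swap)
  also have "\<dots> = Fro N (h * X) Y"
    unfolding Fro_def using assms
    by (auto simp: mult_entry row_col sum_distrib_left sum_distrib_right herm_entry[OF assms(1,2)] mult_ac intro!: sum.cong)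
  finally show ?thesis .
qed

lemma Fro_right: assumes "hermitian_op h" "h \<in> carrier_mat N N" "X \<in> carrier_mat N N" "Y \<in> carrier_mat N N"
  shows "Fro N X (Y * h) = Fro N (X * h) Y"
proof -
  have "Fro N X (Y * h) = (\<Sum>k<N. \<Sum>l<N. \<Sum>m<N. cnj (X $$ (k,l)) * Y $$ (k,m) * h $$ (m,l))"
    unfolding Fro_def using assms by (simp add: mult_entry row_col sum_distrib_left mult.assoc)
  also have "\<dots> = (\<Sum>k<N. \<Sum>m<N. \<Sum>l<N. cnj (X $$ (k,l)) * Y $$ (k,m) * h $$ (m,l))"
    by (rule sum.cong[OF refl], rule sum.swap)
  also have "\<dots> = Fro N (X * h) Y"
    unfolding Fro_def using assms
    by (auto simp: mult_entry row_col sum_distrib_left sum_distrib_right herm_entry[OF assms(1,2)] mult_ac intro!: sum.cong)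
  finally show ?thesis .
qed


lemma sum4_swap: "(\<Sum>k<N. \<Sum>l<N. \<Sum>k'<N. \<Sum>l'<N. (G k l k' l' :: complex)) =
   (\<Sum>k<N. \<Sum>l<N. \<Sum>k'<N. \<Sum>l'<N. G k' l' k l)"
proof -
  have "(\<Sum>k<N. \<Sum>l<N. \<Sum>k'<N. \<Sum>l'<N. G k l k' l') = (\<Sum>k<N. \<Sum>k'<N. \<Sum>l<N. \<Sum>l'<N. G k l k' l')"
    by (rule sum.cong[OF refl], rule sum.swap)
  also have "\<dots> = (\<Sum>k'<N. \<Sum>k<N. \<Sum>l<N. \<Sum>l'<N. G k l k' l')"
    by (rule sum.swap)
  also have "\<dots> = (\<Sum>k'<N. \<Sum>k<N. \<Sum>l'<N. \<Sum>l<N. G k l k' l')"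
    by (rule sum.cong[OF refl], rule sum.cong[OF refl], rule sum.swap)
  also have "\<dots> = (\<Sum>k'<N. \<Sum>l'<N. \<Sum>k<N. \<Sum>l<N. G k l k' l')"
    by (rule sum.cong[OF refl], rule sum.swap)
  finally show ?thesis .
qed

lemma Tm_as_sum: assumes d0: "0 < d" and i: "i < n" and k: "k < d^n" and l: "l < d^n"
  shows "Tm d n i Y $$ (k,l) = (\<Sum>k'<d^n. \<Sum>l'<d^n. Y $$ (k',l') * (if qdigit d l i = qdigit d k i \<and> qdigit d l' i = qdigit d k' i \<and>
         (\<forall>j<n. j \<noteq> i \<longrightarrow> qdigit d k j = qdigit d k' j \<and> qdigit d l j = qdigit d l' j) then 1 else 0))"
  by (subst R1[OF d0 i k l]) (simp add: Tm_entry[OF k l])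

lemma cnj_if01: "cnj (if P then 1 else 0) = (if P then 1 else 0)" by simp

lemma Tm_selfadj: assumes d0: "0 < d" and i: "i < n"
  shows "Fro (d^n) X (Tm d n i Y) = Fro (d^n) (Tm d n i X) Y"
proof -
  let ?C = "\<lambda>k l k' l'. qdigit d l i = qdigit d k i \<and> qdigit d l' i = qdigit d k' i \<and>
         (\<forall>j<n. j \<noteq> i \<longrightarrow> qdigit d k j = qdigit d k' j \<and> qdigit d l j = qdigit d l' j)"
  let ?G = "\<lambda>k l k' l'. cnj (X $$ (k,l)) * Y $$ (k',l') * (if ?C k l k' l' then 1 else 0)"
  have sym: "?C k l k' l' \<longleftrightarrow> ?C k' l' k l" for k l k' l' by auto
  have "Fro (d^n) X (Tm d n i Y) = (\<Sum>k<d^n. \<Sum>l<d^n. \<Sum>k'<d^n. \<Sum>l'<d^n. ?G k l k' l')"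
    unfolding Fro_def by (auto simp: Tm_as_sum[OF d0 i] sum_distrib_left mult.assoc intro!: sum.cong)
  also have "\<dots> = (\<Sum>k<d^n. \<Sum>l<d^n. \<Sum>k'<d^n. \<Sum>l'<d^n. ?G k' l' k l)"
    by (rule sum4_swap)
  also have "\<dots> = Fro (d^n) (Tm d n i X) Y"
    unfolding Fro_def using sym
    by (auto simp: Tm_as_sum[OF d0 i] sum_distrib_right sum_distrib_left cnj_if01 mult_ac intro!: sum.cong)
  finally show ?thesis .
qed

lemma RX: assumes d0: "0 < d" and i: "i < n" and t: "t < d" and c: "c < d"
  shows "(\<Sum>m<d^n. if qdigit d m i = t then F m else 0) = (\<Sum>m<d^n. if qdigit d m i = c then F (upd d n m i t) else (0::complex))"
proof -
  have "(\<Sum>m<d^n. if qdigit d m i = t then F m else 0) = (\<Sum>m\<in>{m\<in>{..<d^n}. qdigit d m i = t}. F m)"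
    by (rule sum.inter_filter[symmetric]) simp
  also have "\<dots> = (\<Sum>m\<in>{m\<in>{..<d^n}. qdigit d m i = c}. F (upd d n m i t))"
  proof (rule sum.reindex_bij_witness[of _ "\<lambda>m. upd d n m i t" "\<lambda>m. upd d n m i c"])
    fix a assume a: "a \<in> {m\<in>{..<d^n}. qdigit d m i = t}"
    show "upd d n (upd d n a i c) i t = a" using a upd_upd[OF d0 i c t] upd_self[OF d0 i] by auto
    show "upd d n a i c \<in> {m\<in>{..<d^n}. qdigit d m i = c}" using upd_less[OF d0 c] qdigit_upd[OF d0 c i] by auto
    show "F (upd d n (upd d n a i c) i t) = F a" using a upd_upd[OF d0 i c t] upd_self[OF d0 i] by auto
  next
    fix b assume b: "b \<in> {m\<in>{..<d^n}. qdigit d m i = c}"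
    show "upd d n (upd d n b i t) i c = b" using b upd_upd[OF d0 i t c] upd_self[OF d0 i] by auto
    show "upd d n b i t \<in> {m\<in>{..<d^n}. qdigit d m i = t}" using upd_less[OF d0 t] qdigit_upd[OF d0 t i] by auto
  qed
  also have "\<dots> = (\<Sum>m<d^n. if qdigit d m i = c then F (upd d n m i t) else 0)"
    by (rule sum.inter_filter) simp
  finally show ?thesis .
qed


lemma Tm_left: assumes d0: "0 < d" and i: "i < n" and off: "offsupp d n h i"
  and h: "h \<in> carrier_mat (d^n) (d^n)" and Y: "Y \<in> carrier_mat (d^n) (d^n)"
  shows "Tm d n i (h * Y) = h * Tm d n i Y"
proof (rule eq_matI)
  let ?N = "d^n"
  have off1: "\<And>k m. k < ?N \<Longrightarrow> m < ?N \<Longrightarrow> h $$ (k,m) \<noteq> 0 \<Longrightarrow> qdigit d k i = qdigit d m i"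
   and off2: "\<And>k m t. k < ?N \<Longrightarrow> m < ?N \<Longrightarrow> t < d \<Longrightarrow> qdigit d k i = qdigit d m i \<Longrightarrow>
         h $$ (upd d n k i t, upd d n m i t) = h $$ (k,m)"
    using off unfolding offsupp_def by blast+
  have TY: "Tm d n i Y \<in> carrier_mat ?N ?N" by (rule Tm_carrier)
  show "dim_row (Tm d n i (h * Y)) = dim_row (h * Tm d n i Y)" using h by (simp add: Tm_def)
  show "dim_col (Tm d n i (h * Y)) = dim_col (h * Tm d n i Y)" using h by (simp add: Tm_def)
  fix k l assume "k < dim_row (h * Tm d n i Y)" "l < dim_col (h * Tm d n i Y)"
  then have k: "k < ?N" and l: "l < ?N" using h by (auto simp: Tm_def)
  have R: "(h * Tm d n i Y) $$ (k,l) = (\<Sum>m<?N. h $$ (k,m) * (if qdigit d m i = qdigit d l i then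
       \<Sum>t<d. Y $$ (upd d n m i t, upd d n l i t) else 0))"
    using h TY k l by (auto simp: row_col[OF h TY k l] Tm_entry intro!: sum.cong)
  have L: "Tm d n i (h * Y) $$ (k,l) = (if qdigit d k i = qdigit d l i then
       \<Sum>t<d. \<Sum>m<?N. h $$ (upd d n k i t, m) * Y $$ (m, upd d n l i t) else 0)"
    using k l by (simp add: Tm_entry mult_entry[OF h Y] upd_less[OF d0])
  show "Tm d n i (h * Y) $$ (k,l) = (h * Tm d n i Y) $$ (k,l)"
  proof (cases "qdigit d k i = qdigit d l i")
    case False
    have "h $$ (k,m) * (if qdigit d m i = qdigit d l i then
       \<Sum>t<d. Y $$ (upd d n m i t, upd d n l i t) else 0) = 0" if m: "m < ?N" for m
    proof (cases "h $$ (k,m) = 0")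
      case False
      then have "qdigit d k i = qdigit d m i" using off1[OF k m] by blast
      then show ?thesis using \<open>qdigit d k i \<noteq> qdigit d l i\<close> by simp
    qed simp
    then have "(\<Sum>m<?N. h $$ (k,m) * (if qdigit d m i = qdigit d l i then
       \<Sum>t<d. Y $$ (upd d n m i t, upd d n l i t) else 0)) = 0" by (intro sum.neutral) auto
    then show ?thesis unfolding L R using False by simp
  next
    case True
    have "(h * Tm d n i Y) $$ (k,l) = (\<Sum>m<?N. \<Sum>t<d. if qdigit d m i = qdigit d k i then
         h $$ (k,m) * Y $$ (upd d n m i t, upd d n l i t) else 0)"
      unfolding R
    proof (intro sum.cong refl)
      fix m assume m: "m \<in> {..<?N}"
      show "h $$ (k,m) * (if qdigit d m i = qdigit d l i then
         \<Sum>t<d. Y $$ (upd d n m i t, upd d n l i t) else 0) = (\<Sum>t<d. if qdigit d m i = qdigit d k i then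
         h $$ (k,m) * Y $$ (upd d n m i t, upd d n l i t) else 0)"
        using off1[OF k, of m] m True by (auto simp: sum_distrib_left)
    qed
    also have "\<dots> = (\<Sum>t<d. \<Sum>m<?N. if qdigit d m i = qdigit d k i then
         h $$ (k,m) * Y $$ (upd d n m i t, upd d n l i t) else 0)"
      by (rule sum.swap)
    also have "\<dots> = (\<Sum>t<d. \<Sum>m<?N. h $$ (upd d n k i t, m) * Y $$ (m, upd d n l i t))"
    proof (rule sum.cong[OF refl])
      fix t assume t: "t \<in> {..<d}"
      then have t': "t < d" by simp
      have ck: "qdigit d k i < d" by (rule qdigit_less[OF d0])
      have "(\<Sum>m<?N. h $$ (upd d n k i t, m) * Y $$ (m, upd d n l i t)) =
          (\<Sum>m<?N. if qdigit d m i = t then h $$ (upd d n k i t, m) * Y $$ (m, upd d n l i t) else 0)"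
      proof (intro sum.cong refl)
        fix m assume m: "m \<in> {..<?N}"
        show "h $$ (upd d n k i t, m) * Y $$ (m, upd d n l i t) =
          (if qdigit d m i = t then h $$ (upd d n k i t, m) * Y $$ (m, upd d n l i t) else 0)"
          using off1[of "upd d n k i t" m] m upd_less[OF d0 t'] qdigit_upd[OF d0 t' i] by auto
      qed
      also have "\<dots> = (\<Sum>m<?N. if qdigit d m i = qdigit d k i then
           h $$ (upd d n k i t, upd d n m i t) * Y $$ (upd d n m i t, upd d n l i t) else 0)"
        by (rule RX[OF d0 i t' ck])
      also have "\<dots> = (\<Sum>m<?N. if qdigit d m i = qdigit d k i then
           h $$ (k,m) * Y $$ (upd d n m i t, upd d n l i t) else 0)"
        using off2[OF k _ t'] by (intro sum.cong refl) auto
      finally show "(\<Sum>m<?N. if qdigit d m i = qdigit d k i then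
         h $$ (k,m) * Y $$ (upd d n m i t, upd d n l i t) else 0) =
         (\<Sum>m<?N. h $$ (upd d n k i t, m) * Y $$ (m, upd d n l i t))" by simp
    qed
    finally show ?thesis unfolding L using True by simp
  qed
qed

lemma Tm_right: assumes d0: "0 < d" and i: "i < n" and off: "offsupp d n h i"
  and h: "h \<in> carrier_mat (d^n) (d^n)" and Y: "Y \<in> carrier_mat (d^n) (d^n)"
  shows "Tm d n i (Y * h) = Tm d n i Y * h"
proof (rule eq_matI)
  let ?N = "d^n"
  have off1: "\<And>k m. k < ?N \<Longrightarrow> m < ?N \<Longrightarrow> h $$ (k,m) \<noteq> 0 \<Longrightarrow> qdigit d k i = qdigit d m i"
   and off2: "\<And>k m t. k < ?N \<Longrightarrow> m < ?N \<Longrightarrow> t < d \<Longrightarrow> qdigit d k i = qdigit d m i \<Longrightarrow>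
         h $$ (upd d n k i t, upd d n m i t) = h $$ (k,m)"
    using off unfolding offsupp_def by blast+
  have TY: "Tm d n i Y \<in> carrier_mat ?N ?N" by (rule Tm_carrier)
  show "dim_row (Tm d n i (Y * h)) = dim_row (Tm d n i Y * h)" using h by (simp add: Tm_def)
  show "dim_col (Tm d n i (Y * h)) = dim_col (Tm d n i Y * h)" using h by (simp add: Tm_def)
  fix k l assume "k < dim_row (Tm d n i Y * h)" "l < dim_col (Tm d n i Y * h)"
  then have k: "k < ?N" and l: "l < ?N" using h by (auto simp: Tm_def)
  have R: "(Tm d n i Y * h) $$ (k,l) = (\<Sum>m<?N. (if qdigit d k i = qdigit d m i then
       \<Sum>t<d. Y $$ (upd d n k i t, upd d n m i t) else 0) * h $$ (m,l))"
    using h TY k l by (auto simp: row_col[OF TY h k l] Tm_entry intro!: sum.cong)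
  have L: "Tm d n i (Y * h) $$ (k,l) = (if qdigit d k i = qdigit d l i then
       \<Sum>t<d. \<Sum>m<?N. Y $$ (upd d n k i t, m) * h $$ (m, upd d n l i t) else 0)"
    using k l by (simp add: Tm_entry mult_entry[OF Y h] upd_less[OF d0])
  show "Tm d n i (Y * h) $$ (k,l) = (Tm d n i Y * h) $$ (k,l)"
  proof (cases "qdigit d k i = qdigit d l i")
    case False
    have "(if qdigit d k i = qdigit d m i then
       \<Sum>t<d. Y $$ (upd d n k i t, upd d n m i t) else 0) * h $$ (m,l) = 0" if m: "m < ?N" for m
    proof (cases "h $$ (m,l) = 0")
      case False
      then have "qdigit d m i = qdigit d l i" using off1[OF m l] by blast
      then show ?thesis using \<open>qdigit d k i \<noteq> qdigit d l i\<close> by simp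
    qed simp
    then have "(\<Sum>m<?N. (if qdigit d k i = qdigit d m i then
       \<Sum>t<d. Y $$ (upd d n k i t, upd d n m i t) else 0) * h $$ (m,l)) = 0" by (intro sum.neutral) auto
    then show ?thesis unfolding L R using False by simp
  next
    case True
    have "(Tm d n i Y * h) $$ (k,l) = (\<Sum>m<?N. \<Sum>t<d. if qdigit d m i = qdigit d l i then
         Y $$ (upd d n k i t, upd d n m i t) * h $$ (m,l) else 0)"
      unfolding R
    proof (intro sum.cong refl)
      fix m assume m: "m \<in> {..<?N}"
      show "(if qdigit d k i = qdigit d m i then
         \<Sum>t<d. Y $$ (upd d n k i t, upd d n m i t) else 0) * h $$ (m,l) = (\<Sum>t<d. if qdigit d m i = qdigit d l i then
         Y $$ (upd d n k i t, upd d n m i t) * h $$ (m,l) else 0)"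
        using off1[OF _ l, of m] m True by (auto simp: sum_distrib_right)
    qed
    also have "\<dots> = (\<Sum>t<d. \<Sum>m<?N. if qdigit d m i = qdigit d l i then
         Y $$ (upd d n k i t, upd d n m i t) * h $$ (m,l) else 0)"
      by (rule sum.swap)
    also have "\<dots> = (\<Sum>t<d. \<Sum>m<?N. Y $$ (upd d n k i t, m) * h $$ (m, upd d n l i t))"
    proof (rule sum.cong[OF refl])
      fix t assume t: "t \<in> {..<d}"
      then have t': "t < d" by simp
      have cl: "qdigit d l i < d" by (rule qdigit_less[OF d0])
      have "(\<Sum>m<?N. Y $$ (upd d n k i t, m) * h $$ (m, upd d n l i t)) =
          (\<Sum>m<?N. if qdigit d m i = t then Y $$ (upd d n k i t, m) * h $$ (m, upd d n l i t) else 0)"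
      proof (intro sum.cong refl)
        fix m assume m: "m \<in> {..<?N}"
        show "Y $$ (upd d n k i t, m) * h $$ (m, upd d n l i t) =
          (if qdigit d m i = t then Y $$ (upd d n k i t, m) * h $$ (m, upd d n l i t) else 0)"
          using off1[of m "upd d n l i t"] m upd_less[OF d0 t'] qdigit_upd[OF d0 t' i] by auto
      qed
      also have "\<dots> = (\<Sum>m<?N. if qdigit d m i = qdigit d l i then
           Y $$ (upd d n k i t, upd d n m i t) * h $$ (upd d n m i t, upd d n l i t) else 0)"
        by (rule RX[OF d0 i t' cl])
      also have "\<dots> = (\<Sum>m<?N. if qdigit d m i = qdigit d l i then
           Y $$ (upd d n k i t, upd d n m i t) * h $$ (m,l) else 0)"
        using off2[OF _ l t'] by (intro sum.cong refl) auto
      finally show "(\<Sum>m<?N. if qdigit d m i = qdigit d l i then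
         Y $$ (upd d n k i t, upd d n m i t) * h $$ (m,l) else 0) =
         (\<Sum>m<?N. Y $$ (upd d n k i t, m) * h $$ (m, upd d n l i t))" by simp
    qed
    finally show ?thesis unfolding L using True by simp
  qed
qed


definition Kmat :: "nat \<Rightarrow> complex mat \<Rightarrow> complex mat \<Rightarrow> complex mat" where
  "Kmat N h Z = mat N N (\<lambda>(k,l). - \<i> * ((h * Z) $$ (k,l) - (Z * h) $$ (k,l)))"

lemma Kmat_carrier: "Kmat N h Z \<in> carrier_mat N N" unfolding Kmat_def by simp

lemma Fro_Kmat: "Fro N X (Kmat N h Z) = - \<i> * (Fro N X (h * Z) - Fro N X (Z * h))"
  unfolding Fro_def Kmat_def
  by (simp add: sum_distrib_left sum_subtractf[symmetric] right_diff_distrib mult_ac)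

lemma re_aux: assumes "z = cnj z" "w = cnj w" shows "Re (- \<i> * (z - w)) = 0"
proof -
  have "Im z = 0" using arg_cong[where f=Im, OF assms(1)] by simp
  moreover have "Im w = 0" using arg_cong[where f=Im, OF assms(2)] by simp
  ultimately show ?thesis by simp
qed

lemma Re_Fro_K: assumes "hermitian_op h" "h \<in> carrier_mat N N" "Q \<in> carrier_mat N N"
  shows "Re (Fro N Q (Kmat N h Q)) = 0"
proof -
  have a: "Fro N Q (h * Q) = cnj (Fro N Q (h * Q))"
    using Fro_left[OF assms(1,2,3,3)] Fro_swap by metis
  have b: "Fro N Q (Q * h) = cnj (Fro N Q (Q * h))"
    using Fro_right[OF assms(1,2,3,3)] Fro_swap by metis
  show ?thesis unfolding Fro_Kmat using re_aux[OF a b] .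
qed

lemma Tm_Kmat: assumes d0: "0 < d" and i: "i < n" and off: "offsupp d n h i"
  and h: "h \<in> carrier_mat (d^n) (d^n)" and Q: "Q \<in> carrier_mat (d^n) (d^n)"
  shows "Tm d n i (Kmat (d^n) h Q) = Kmat (d^n) h (Tm d n i Q)"
proof (rule eq_matI)
  show "dim_row (Tm d n i (Kmat (d^n) h Q)) = dim_row (Kmat (d^n) h (Tm d n i Q))" by (simp add: Tm_def Kmat_def)
  show "dim_col (Tm d n i (Kmat (d^n) h Q)) = dim_col (Kmat (d^n) h (Tm d n i Q))" by (simp add: Tm_def Kmat_def)
  fix k l assume "k < dim_row (Kmat (d^n) h (Tm d n i Q))" "l < dim_col (Kmat (d^n) h (Tm d n i Q))"
  then have k: "k < d^n" and l: "l < d^n" by (auto simp: Kmat_def)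
  have "Tm d n i (Kmat (d^n) h Q) $$ (k,l) = - \<i> * (Tm d n i (h * Q) $$ (k,l) - Tm d n i (Q * h) $$ (k,l))"
    using k l by (simp add: Tm_entry Kmat_def upd_less[OF d0] sum_distrib_left sum_subtractf right_diff_distrib)
  also have "\<dots> = Kmat (d^n) h (Tm d n i Q) $$ (k,l)"
    unfolding Tm_left[OF d0 i off h Q] Tm_right[OF d0 i off h Q] using k l by (simp add: Kmat_def)
  finally show "Tm d n i (Kmat (d^n) h Q) $$ (k,l) = Kmat (d^n) h (Tm d n i Q) $$ (k,l)" .
qed

lemma Re_Fro_TK: assumes d0: "0 < d" and i: "i < n" and off: "offsupp d n h i" and herm: "hermitian_op h"
  and h: "h \<in> carrier_mat (d^n) (d^n)" and Q: "Q \<in> carrier_mat (d^n) (d^n)"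
  shows "Re (Fro (d^n) Q (Tm d n i (Kmat (d^n) h Q))) = 0"
proof -
  let ?N = "d^n"
  let ?T = "Tm d n i"
  have TO: "?T Q \<in> carrier_mat ?N ?N" by (rule Tm_carrier)
  have hO: "h * Q \<in> carrier_mat ?N ?N" "Q * h \<in> carrier_mat ?N ?N" using h Q by auto
  have a: "Fro ?N Q (h * ?T Q) = cnj (Fro ?N Q (h * ?T Q))"
  proof -
    have "Fro ?N Q (h * ?T Q) = Fro ?N (h * Q) (?T Q)" by (rule Fro_left[OF herm h Q TO])
    also have "\<dots> = Fro ?N (?T (h * Q)) Q" by (rule Tm_selfadj[OF d0 i])
    also have "\<dots> = Fro ?N (h * ?T Q) Q" unfolding Tm_left[OF d0 i off h Q] ..
    also have "\<dots> = cnj (Fro ?N Q (h * ?T Q))" by (rule Fro_swap)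
    finally show ?thesis .
  qed
  have b: "Fro ?N Q (?T Q * h) = cnj (Fro ?N Q (?T Q * h))"
  proof -
    have "Fro ?N Q (?T Q * h) = Fro ?N (Q * h) (?T Q)" by (rule Fro_right[OF herm h Q TO])
    also have "\<dots> = Fro ?N (?T (Q * h)) Q" by (rule Tm_selfadj[OF d0 i])
    also have "\<dots> = Fro ?N (?T Q * h) Q" unfolding Tm_right[OF d0 i off h Q] ..
    also have "\<dots> = cnj (Fro ?N Q (?T Q * h))" by (rule Fro_swap)
    finally show ?thesis .
  qed
  show ?thesis unfolding Tm_Kmat[OF d0 i off h Q] Fro_Kmat using re_aux[OF a b] .
qed



definition psi :: "nat \<Rightarrow> nat \<Rightarrow> nat \<Rightarrow> complex mat \<Rightarrow> complex mat \<Rightarrow> complex" where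
  "psi d n i X Y = (\<Sum>a\<in>Vn d n. if a i \<noteq> (0,0) then cnj (cpa d n X a) * cpa d n Y a else 0)"

lemma psi_decomp: assumes d: "2 \<le> d" and i: "i < n" and X: "X \<in> carrier_mat (d^n) (d^n)" and Y: "Y \<in> carrier_mat (d^n) (d^n)"
  shows "psi d n i X Y = of_nat (d^n) * Fro (d^n) X Y - of_nat (d^(n-1)) * Fro (d^n) X (Tm d n i Y)"
proof -
  have "psi d n i X Y = (\<Sum>a\<in>Vn d n. cnj (cpa d n X a) * cpa d n Y a) -
      (\<Sum>a\<in>Vn d n. if a i = (0,0) then cnj (cpa d n X a) * cpa d n Y a else 0)"
    unfolding psi_def sum_subtractf[symmetric] by (intro sum.cong refl) auto
  then show ?thesis using parseval[OF d X Y] psi0_sum[OF d i X Y] by simp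
qed

lemma psi_Re_zero: assumes d: "2 \<le> d" and i: "i < n" and off: "offsupp d n h i" and herm: "hermitian_op h"
  and h: "h \<in> carrier_mat (d^n) (d^n)" and Q: "Q \<in> carrier_mat (d^n) (d^n)"
  shows "Re (psi d n i Q (Kmat (d^n) h Q)) = 0"
proof -
  have d0: "0 < d" using d by simp
  have "Re (psi d n i Q (Kmat (d^n) h Q)) = real (d^n) * Re (Fro (d^n) Q (Kmat (d^n) h Q)) -
      real (d^(n-1)) * Re (Fro (d^n) Q (Tm d n i (Kmat (d^n) h Q)))"
    unfolding psi_decomp[OF d i Q Kmat_carrier] by simp
  also have "\<dots> = 0" using Re_Fro_K[OF herm h Q] Re_Fro_TK[OF d0 i off herm h Q] by simp
  finally show ?thesis .
qed

definition frob :: "nat \<Rightarrow> complex mat \<Rightarrow> real" where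
  "frob N X = L2_set (\<lambda>p. cmod (X $$ p)) ({..<N} \<times> {..<N})"

lemma frob_nonneg: "0 \<le> frob N X" unfolding frob_def by simp

lemma frob_sq: "(frob N X)\<^sup>2 = (\<Sum>k<N. \<Sum>l<N. (cmod (X $$ (k,l)))\<^sup>2)"
  unfolding frob_def L2_set_def by (simp add: sum_nonneg sum.cartesian_product)

lemma cnj_mult_self: "cnj z * z = complex_of_real ((cmod z)\<^sup>2)"
  by (metis complex_norm_square mult.commute)

lemma Fro_self: "Fro N X X = of_real ((frob N X)\<^sup>2)"
  unfolding frob_sq Fro_def by (simp only: cnj_mult_self of_real_sum)

lemma psi_bound: assumes d: "2 \<le> d" and X: "X \<in> carrier_mat (d^n) (d^n)" and Y: "Y \<in> carrier_mat (d^n) (d^n)"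
  shows "cmod (psi d n i X Y) \<le> real (d^n) * frob (d^n) X * frob (d^n) Y"
proof -
  let ?V = "{a \<in> Vn d n. a i \<noteq> (0,0)}"
  have fin: "finite (Vn d n)" by (rule finite_Vn)
  have L2c: "L2_set (\<lambda>a. cmod (cpa d n Z a)) (Vn d n) = sqrt (real (d^n)) * frob (d^n) Z"
    if Z: "Z \<in> carrier_mat (d^n) (d^n)" for Z
  proof -
    have "complex_of_real (\<Sum>a\<in>Vn d n. (cmod (cpa d n Z a))\<^sup>2) = (\<Sum>a\<in>Vn d n. cnj (cpa d n Z a) * cpa d n Z a)"
      by (simp only: cnj_mult_self of_real_sum)
    also have "\<dots> = complex_of_real (real (d^n) * (frob (d^n) Z)\<^sup>2)"
      unfolding parseval[OF d Z Z] Fro_self by simp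
    finally have "(\<Sum>a\<in>Vn d n. (cmod (cpa d n Z a))\<^sup>2) = real (d^n) * (frob (d^n) Z)\<^sup>2"
      using of_real_eq_iff by blast
    then show ?thesis unfolding L2_set_def by (simp add: real_sqrt_mult frob_nonneg)
  qed
  have sub: "L2_set (\<lambda>a. cmod (cpa d n Z a)) ?V \<le> L2_set (\<lambda>a. cmod (cpa d n Z a)) (Vn d n)" for Z
    unfolding L2_set_def by (intro real_sqrt_le_mono sum_mono2 fin) auto
  have "psi d n i X Y = (\<Sum>a\<in>?V. cnj (cpa d n X a) * cpa d n Y a)"
    unfolding psi_def by (rule sum.inter_filter[symmetric, OF fin])
  then have "cmod (psi d n i X Y) \<le> (\<Sum>a\<in>?V. \<bar>cmod (cpa d n X a)\<bar> * \<bar>cmod (cpa d n Y a)\<bar>)"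
    using norm_sum[of "\<lambda>a. cnj (cpa d n X a) * cpa d n Y a" ?V] by (simp add: norm_mult)
  also have "\<dots> \<le> L2_set (\<lambda>a. cmod (cpa d n X a)) ?V * L2_set (\<lambda>a. cmod (cpa d n Y a)) ?V"
    by (rule L2_set_mult_ineq)
  also have "\<dots> \<le> L2_set (\<lambda>a. cmod (cpa d n X a)) (Vn d n) * L2_set (\<lambda>a. cmod (cpa d n Y a)) (Vn d n)"
    by (intro mult_mono sub) auto
  also have "\<dots> = real (d^n) * frob (d^n) X * frob (d^n) Y"
    unfolding L2c[OF X] L2c[OF Y] by (simp add: mult_ac)
  finally show ?thesis .
qed


lemma cvec_norm_vec: "cvec_norm (vec N f) = sqrt (\<Sum>m<N. (cmod (f m))\<^sup>2)"
  unfolding cvec_norm_def by simp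

lemma mult_vec_entry: "h \<in> carrier_mat N N \<Longrightarrow> k < N \<Longrightarrow> (h *\<^sub>v vec N f) $ k = (\<Sum>m<N. h $$ (k,m) * f m)"
  by (simp add: scalar_prod_def atLeast0LessThan)

lemma opn_bdd: assumes h: "h \<in> carrier_mat N N"
  shows "bdd_above {cvec_norm (h *\<^sub>v v) | v. v \<in> carrier_vec (dim_col h) \<and> cvec_norm v \<le> 1}"
proof (rule bdd_aboveI)
  let ?C = "sqrt (\<Sum>k<N. (\<Sum>m<N. cmod (h $$ (k,m)))\<^sup>2)"
  fix x assume "x \<in> {cvec_norm (h *\<^sub>v v) | v. v \<in> carrier_vec (dim_col h) \<and> cvec_norm v \<le> 1}"
  then obtain v where x: "x = cvec_norm (h *\<^sub>v v)" and v: "v \<in> carrier_vec N" and nv: "cvec_norm v \<le> 1"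
    using h by auto
  have vm: "cmod (v $ m) \<le> 1" if "m < N" for m
  proof -
    have "cmod (v $ m) \<le> L2_set (\<lambda>i. cmod (v $ i)) {..<N}" by (rule member_le_L2_set) (use that in auto)
    also have "\<dots> = cvec_norm v" using v unfolding cvec_norm_def L2_set_def by simp
    finally show ?thesis using nv by simp
  qed
  have hv: "cmod ((h *\<^sub>v v) $ k) \<le> (\<Sum>m<N. cmod (h $$ (k,m)))" if k: "k < N" for k
  proof -
    have "(h *\<^sub>v v) $ k = (\<Sum>m<N. h $$ (k,m) * v $ m)"
      using h v k by (simp add: scalar_prod_def atLeast0LessThan)
    then have "cmod ((h *\<^sub>v v) $ k) \<le> (\<Sum>m<N. cmod (h $$ (k,m)) * cmod (v $ m))"
      by (metis (no_types, lifting) norm_mult norm_sum sum.cong)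
    also have "\<dots> \<le> (\<Sum>m<N. cmod (h $$ (k,m)))"
      using vm by (intro sum_mono) (simp add: mult_left_le)
    finally show ?thesis .
  qed
  have "x = sqrt (\<Sum>k<N. (cmod ((h *\<^sub>v v) $ k))\<^sup>2)" using x h unfolding cvec_norm_def by simp
  also have "\<dots> \<le> ?C"
    using hv by (intro real_sqrt_le_mono sum_mono power_mono) auto
  finally show "x \<le> ?C" .
qed

lemma opn_apply: assumes h: "h \<in> carrier_mat N N" and on: "op_norm h = 1"
  shows "(\<Sum>k<N. (cmod (\<Sum>m<N. h $$ (k,m) * f m))\<^sup>2) \<le> (\<Sum>m<N. (cmod (f m))\<^sup>2)"
proof -
  let ?L = "\<Sum>k<N. (cmod (\<Sum>m<N. h $$ (k,m) * f m))\<^sup>2"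
  let ?R = "\<Sum>m<N. (cmod (f m))\<^sup>2"
  show ?thesis
  proof (cases "?R = 0")
    case True
    then have "\<forall>m\<in>{..<N}. (cmod (f m))\<^sup>2 = 0" by (subst sum_nonneg_eq_0_iff[symmetric]) auto
    then have "f m = 0" if "m < N" for m using that by simp
    then have "?L = 0" by simp
    then show ?thesis by (simp add: sum_nonneg)
  next
    case False
    have R0: "?R > 0" using False by (simp add: order_le_neq_trans sum_nonneg)
    define s where "s = sqrt ?R"
    have s0: "s > 0" using R0 unfolding s_def by simp
    have ss: "s\<^sup>2 = ?R" unfolding s_def using R0 by simp
    define w where "w = vec N (\<lambda>m. f m / of_real s)"
    have wc: "w \<in> carrier_vec (dim_col h)" unfolding w_def using h by simp
    have nw: "cvec_norm w = 1"
    proof -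
      have "(\<Sum>m<N. (cmod (f m / of_real s))\<^sup>2) = ?R / s\<^sup>2"
        using s0 by (simp add: norm_divide power_divide sum_divide_distrib)
      then show ?thesis unfolding w_def cvec_norm_vec using ss R0 by simp
    qed
    have "cvec_norm (h *\<^sub>v w) \<le> op_norm h"
      unfolding op_norm_def by (rule cSup_upper[OF _ opn_bdd[OF h]]) (use wc nw in auto)
    then have le1: "cvec_norm (h *\<^sub>v w) \<le> 1" using on by simp
    have e: "(h *\<^sub>v w) $ k = (\<Sum>m<N. h $$ (k,m) * f m) / of_real s" if "k < N" for k
      unfolding w_def using h that by (simp add: scalar_prod_def atLeast0LessThan sum_divide_distrib)
    have "cvec_norm (h *\<^sub>v w) = sqrt (\<Sum>k<N. (cmod ((h *\<^sub>v w) $ k))\<^sup>2)"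
      unfolding cvec_norm_def using h unfolding w_def by simp
    also have "\<dots> = sqrt (\<Sum>k<N. (cmod (\<Sum>m<N. h $$ (k,m) * f m))\<^sup>2 / s\<^sup>2)"
      using s0 e by (intro arg_cong[where f=sqrt] sum.cong refl) (simp add: norm_divide power_divide)
    also have "\<dots> = sqrt (?L / s\<^sup>2)" by (simp add: sum_divide_distrib)
    finally have "sqrt (?L / s\<^sup>2) \<le> 1" using le1 by simp
    then have "?L / s\<^sup>2 \<le> 1" by simp
    then show ?thesis using ss R0 by (simp add: divide_le_eq)
  qed
qed


lemma frob_le_from_sq: "(frob N A)\<^sup>2 \<le> (frob N B)\<^sup>2 \<Longrightarrow> frob N A \<le> frob N B"
  using frob_nonneg power2_le_imp_le by blast

lemma frob_left: assumes h: "h \<in> carrier_mat N N" and on: "op_norm h = 1" and X: "X \<in> carrier_mat N N"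
  shows "frob N (h * X) \<le> frob N X"
proof (rule frob_le_from_sq)
  have "(frob N (h * X))\<^sup>2 = (\<Sum>k<N. \<Sum>l<N. (cmod (\<Sum>m<N. h $$ (k,m) * X $$ (m,l)))\<^sup>2)"
    unfolding frob_sq using h X by (intro sum.cong refl) (simp add: row_col[OF h X])
  also have "\<dots> = (\<Sum>l<N. \<Sum>k<N. (cmod (\<Sum>m<N. h $$ (k,m) * X $$ (m,l)))\<^sup>2)"
    by (rule sum.swap)
  also have "\<dots> \<le> (\<Sum>l<N. \<Sum>m<N. (cmod (X $$ (m,l)))\<^sup>2)"
    by (intro sum_mono opn_apply[OF h on])
  also have "\<dots> = (frob N X)\<^sup>2" unfolding frob_sq by (rule sum.swap)
  finally show "(frob N (h * X))\<^sup>2 \<le> (frob N X)\<^sup>2" .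
qed

lemma frob_right: assumes herm: "hermitian_op h" and h: "h \<in> carrier_mat N N" and on: "op_norm h = 1"
  and X: "X \<in> carrier_mat N N"
  shows "frob N (X * h) \<le> frob N X"
proof (rule frob_le_from_sq)
  have "(frob N (X * h))\<^sup>2 = (\<Sum>k<N. \<Sum>l<N. (cmod (\<Sum>m<N. h $$ (l,m) * cnj (X $$ (k,m))))\<^sup>2)"
    unfolding frob_sq
  proof (intro sum.cong refl)
    fix k l assume k: "k \<in> {..<N}" and l: "l \<in> {..<N}"
    have "cnj ((X * h) $$ (k,l)) = (\<Sum>m<N. h $$ (l,m) * cnj (X $$ (k,m)))"
      using h X k l by (auto simp: row_col[OF X h] herm_entry[OF herm h] mult.commute intro!: sum.cong)
    then show "(cmod ((X * h) $$ (k,l)))\<^sup>2 = (cmod (\<Sum>m<N. h $$ (l,m) * cnj (X $$ (k,m))))\<^sup>2"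
      by (metis complex_mod_cnj)
  qed
  also have "\<dots> \<le> (\<Sum>k<N. \<Sum>m<N. (cmod (cnj (X $$ (k,m))))\<^sup>2)"
    by (intro sum_mono opn_apply[OF h on])
  also have "\<dots> = (frob N X)\<^sup>2" unfolding frob_sq by simp
  finally show "(frob N (X * h))\<^sup>2 \<le> (frob N X)\<^sup>2" .
qed

lemma frob_K: assumes herm: "hermitian_op h" and h: "h \<in> carrier_mat N N" and on: "op_norm h = 1"
  and Q: "Q \<in> carrier_mat N N"
  shows "frob N (Kmat N h Q) \<le> 2 * frob N Q"
proof -
  have "frob N (Kmat N h Q) \<le> L2_set (\<lambda>p. cmod ((h * Q) $$ p) + cmod ((Q * h) $$ p)) ({..<N} \<times> {..<N})"
    unfolding frob_def
  proof (rule L2_set_mono)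
    fix p assume p: "p \<in> {..<N} \<times> {..<N}"
    then obtain k l where pk: "p = (k,l)" "k < N" "l < N" by auto
    have "cmod (Kmat N h Q $$ p) = cmod ((h * Q) $$ p - (Q * h) $$ p)"
      using pk by (simp add: Kmat_def norm_mult)
    also have "\<dots> \<le> cmod ((h * Q) $$ p) + cmod ((Q * h) $$ p)" by (rule norm_triangle_ineq4)
    finally show "cmod (Kmat N h Q $$ p) \<le> cmod ((h * Q) $$ p) + cmod ((Q * h) $$ p)" .
  qed simp
  also have "\<dots> \<le> frob N (h * Q) + frob N (Q * h)"
    unfolding frob_def by (rule L2_set_triangle_ineq)
  also have "\<dots> \<le> frob N Q + frob N Q"
    by (intro add_mono frob_left[OF h on Q] frob_right[OF herm h on Q])
  finally show ?thesis by simp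
qed



section \<open>Adjoint and derivative of the conjugated operator\<close>

lemma row_col_gen: "A \<in> carrier_mat nr n \<Longrightarrow> B \<in> carrier_mat n nc \<Longrightarrow> k < nr \<Longrightarrow> l < nc \<Longrightarrow>
  row A k \<bullet> col B l = (\<Sum>m<n. A $$ (k,m) * B $$ (m,l))"
  by (simp add: scalar_prod_def atLeast0LessThan)

lemma adj_carrier: "A \<in> carrier_mat nr nc \<Longrightarrow> adj A \<in> carrier_mat nc nr"
  unfolding adj_def by simp

lemma adj_entry: "A \<in> carrier_mat nr nc \<Longrightarrow> i < nc \<Longrightarrow> j < nr \<Longrightarrow> adj A $$ (i,j) = cnj (A $$ (j,i))"
  unfolding adj_def by simp

lemma adj_mult: assumes A: "A \<in> carrier_mat nr n" and B: "B \<in> carrier_mat n nc"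
  shows "adj (A * B) = adj B * adj A"
proof (rule eq_matI)
  have AB: "A * B \<in> carrier_mat nr nc" using A B by simp
  have aA: "adj A \<in> carrier_mat n nr" and aB: "adj B \<in> carrier_mat nc n" using A B by (auto simp: adj_carrier)
  show "dim_row (adj (A * B)) = dim_row (adj B * adj A)" using AB aA aB adj_carrier[OF AB] by simp
  show "dim_col (adj (A * B)) = dim_col (adj B * adj A)" using AB aA aB adj_carrier[OF AB] by simp
  fix i j assume "i < dim_row (adj B * adj A)" "j < dim_col (adj B * adj A)"
  then have i: "i < nc" and j: "j < nr" using aA aB by auto
  show "adj (A * B) $$ (i,j) = (adj B * adj A) $$ (i,j)"
    using i j A B aA aB
    by (auto simp: adj_entry[OF AB] adj_entry[OF A] adj_entry[OF B] row_col_gen[OF A B] row_col_gen[OF aB aA]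
        mult.commute intro!: sum.cong)
qed

lemma adj_smult: "adj (c \<cdot>\<^sub>m A) = cnj c \<cdot>\<^sub>m adj A"
  unfolding adj_def by (rule eq_matI) auto

lemma adj_one: "adj (1\<^sub>m N) = (1\<^sub>m N :: complex mat)"
  unfolding adj_def by (rule eq_matI) auto

lemma triple_entry: assumes X: "X \<in> carrier_mat N N" and A: "A \<in> carrier_mat N N" and Y: "Y \<in> carrier_mat N N"
  and k: "k < N" and l: "l < N"
  shows "(X * A * adj Y) $$ (k,l) = (\<Sum>q<N. (\<Sum>p<N. X $$ (k,p) * A $$ (p,q)) * cnj (Y $$ (l,q)))"
proof -
  have XA: "X * A \<in> carrier_mat N N" using X A by simp
  have aY: "adj Y \<in> carrier_mat N N" using Y by (rule adj_carrier)
  show ?thesis unfolding mult_entry[OF XA aY k l] using k l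
    by (auto simp: mult_entry[OF X A] adj_entry[OF Y] simp del: index_mult_mat intro!: sum.cong)
qed

definition Hm :: "nat \<Rightarrow> nat \<Rightarrow> (nat \<Rightarrow> complex mat) \<Rightarrow> (nat \<Rightarrow> real \<Rightarrow> real) \<Rightarrow> real \<Rightarrow> complex mat" where
  "Hm N m h r s = mat N N (\<lambda>(k,l). \<Sum>j<m. complex_of_real (r j s) * h j $$ (k,l))"

lemma Hm_carrier: "Hm N m h r s \<in> carrier_mat N N" unfolding Hm_def by simp

lemma Hm_adj: assumes "\<And>j. j < m \<Longrightarrow> h j \<in> carrier_mat N N" "\<And>j. j < m \<Longrightarrow> hermitian_op (h j)"
  shows "adj (Hm N m h r s) = Hm N m h r s"
  unfolding adj_def Hm_def by (rule eq_matI) (auto simp: herm_entry[OF assms(2,1)] intro!: sum.cong)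

lemma Hm_left: assumes "\<And>j. j < m \<Longrightarrow> h j \<in> carrier_mat N N" and Q: "Q \<in> carrier_mat N N" and k: "k < N" and l: "l < N"
  shows "(Hm N m h r s * Q) $$ (k,l) = (\<Sum>j<m. complex_of_real (r j s) * (h j * Q) $$ (k,l))"
proof -
  have "(Hm N m h r s * Q) $$ (k,l) = (\<Sum>q<N. (\<Sum>j<m. complex_of_real (r j s) * h j $$ (k,q)) * Q $$ (q,l))"
    unfolding mult_entry[OF Hm_carrier Q k l] using k l by (auto simp: Hm_def intro!: sum.cong)
  also have "\<dots> = (\<Sum>j<m. \<Sum>q<N. complex_of_real (r j s) * h j $$ (k,q) * Q $$ (q,l))"
    by (simp add: sum_distrib_right) (rule sum.swap)
  also have "\<dots> = (\<Sum>j<m. complex_of_real (r j s) * (h j * Q) $$ (k,l))"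
  proof (rule sum.cong[OF refl])
    fix j assume "j \<in> {..<m}"
    then have hj: "h j \<in> carrier_mat N N" using assms(1) by simp
    show "(\<Sum>q<N. complex_of_real (r j s) * h j $$ (k,q) * Q $$ (q,l)) = complex_of_real (r j s) * (h j * Q) $$ (k,l)"
      unfolding mult_entry[OF hj Q k l] by (simp add: sum_distrib_left mult.assoc)
  qed
  finally show ?thesis .
qed

lemma Hm_right: assumes "\<And>j. j < m \<Longrightarrow> h j \<in> carrier_mat N N" and Q: "Q \<in> carrier_mat N N" and k: "k < N" and l: "l < N"
  shows "(Q * Hm N m h r s) $$ (k,l) = (\<Sum>j<m. complex_of_real (r j s) * (Q * h j) $$ (k,l))"
proof -
  have "(Q * Hm N m h r s) $$ (k,l) = (\<Sum>q<N. Q $$ (k,q) * (\<Sum>j<m. complex_of_real (r j s) * h j $$ (q,l)))"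
    unfolding mult_entry[OF Q Hm_carrier k l] using k l by (auto simp: Hm_def intro!: sum.cong)
  also have "\<dots> = (\<Sum>j<m. \<Sum>q<N. complex_of_real (r j s) * (Q $$ (k,q) * h j $$ (q,l)))"
    by (simp add: sum_distrib_left mult_ac) (rule sum.swap)
  also have "\<dots> = (\<Sum>j<m. complex_of_real (r j s) * (Q * h j) $$ (k,l))"
  proof (rule sum.cong[OF refl])
    fix j assume "j \<in> {..<m}"
    then have hj: "h j \<in> carrier_mat N N" using assms(1) by simp
    show "(\<Sum>q<N. complex_of_real (r j s) * (Q $$ (k,q) * h j $$ (q,l))) = complex_of_real (r j s) * (Q * h j) $$ (k,l)"
      unfolding mult_entry[OF Q hj k l] by (simp add: sum_distrib_left)
  qed
  finally show ?thesis .
qed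


lemma Q_deriv:
  assumes hc: "\<And>j. j < m \<Longrightarrow> h j \<in> carrier_mat N N" and hh: "\<And>j. j < m \<Longrightarrow> hermitian_op (h j)"
    and A: "A \<in> carrier_mat N N"
    and Wc: "\<forall>s\<in>{0..1}. W s \<in> carrier_mat N N"
    and Wd: "\<forall>s\<in>{0..1}. \<forall>k<N. \<forall>l<N.
           ((\<lambda>t. W t $$ (k,l)) has_vector_derivative (- \<i> * (Hm N m h r s * W s) $$ (k,l))) (at s within {0..1})"
    and s: "s \<in> {0..1}" and k: "k < N" and l: "l < N"
  shows "((\<lambda>t. (W t * A * adj (W t)) $$ (k,l)) has_vector_derivative
           (\<Sum>j<m. complex_of_real (r j s) * Kmat N (h j) (W s * A * adj (W s)) $$ (k,l))) (at s within {0..1})"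
proof -
  let ?H = "Hm N m h r s"
  let ?W = "W s"
  let ?Q = "?W * A * adj ?W"
  define W' where "W' = (- \<i>) \<cdot>\<^sub>m (?H * ?W)"
  have Ws: "?W \<in> carrier_mat N N" using Wc s by blast
  have H: "?H \<in> carrier_mat N N" by (rule Hm_carrier)
  have W'c: "W' \<in> carrier_mat N N" unfolding W'_def using H Ws by simp
  have aW: "adj ?W \<in> carrier_mat N N" using Ws by (rule adj_carrier)
  have Qc: "?Q \<in> carrier_mat N N" using Ws A aW by simp
  have W'e: "W' $$ (x,y) = - \<i> * (?H * ?W) $$ (x,y)" if "x < N" "y < N" for x y
    unfolding W'_def using that H Ws by simp
  have dW: "((\<lambda>t. W t $$ (x,y)) has_vector_derivative W' $$ (x,y)) (at s within {0..1})" if "x < N" "y < N" for x y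
    using Wd s that W'e by simp
  have deriv: "((\<lambda>t. \<Sum>q<N. (\<Sum>p<N. W t $$ (k,p) * A $$ (p,q)) * cnj (W t $$ (l,q))) has_vector_derivative
     (\<Sum>q<N. (\<Sum>p<N. ?W $$ (k,p) * A $$ (p,q)) * cnj (W' $$ (l,q)) + (\<Sum>p<N. W' $$ (k,p) * A $$ (p,q)) * cnj (?W $$ (l,q))))
     (at s within {0..1})"
  proof (rule has_vector_derivative_sum)
    fix q assume q: "q \<in> {..<N}"
    have d1: "((\<lambda>t. \<Sum>p<N. W t $$ (k,p) * A $$ (p,q)) has_vector_derivative (\<Sum>p<N. W' $$ (k,p) * A $$ (p,q))) (at s within {0..1})"
      by (rule has_vector_derivative_sum, rule has_vector_derivative_mult_left, rule dW) (use k in auto)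
    have d2: "((\<lambda>t. cnj (W t $$ (l,q))) has_vector_derivative cnj (W' $$ (l,q))) (at s within {0..1})"
      by (rule has_vector_derivative_cnj, rule dW) (use l q in auto)
    show "((\<lambda>t. (\<Sum>p<N. W t $$ (k,p) * A $$ (p,q)) * cnj (W t $$ (l,q))) has_vector_derivative
      (\<Sum>p<N. ?W $$ (k,p) * A $$ (p,q)) * cnj (W' $$ (l,q)) + (\<Sum>p<N. W' $$ (k,p) * A $$ (p,q)) * cnj (?W $$ (l,q)))
      (at s within {0..1})"
      by (rule has_vector_derivative_mult[OF d1 d2])
  qed
  have eqQ: "(W t * A * adj (W t)) $$ (k,l) = (\<Sum>q<N. (\<Sum>p<N. W t $$ (k,p) * A $$ (p,q)) * cnj (W t $$ (l,q)))"
    if "t \<in> {0..1}" for t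
    using triple_entry[OF _ A _ k l] Wc that by blast
  have val: "(\<Sum>q<N. (\<Sum>p<N. ?W $$ (k,p) * A $$ (p,q)) * cnj (W' $$ (l,q)) + (\<Sum>p<N. W' $$ (k,p) * A $$ (p,q)) * cnj (?W $$ (l,q)))
      = (?W * A * adj W') $$ (k,l) + (W' * A * adj ?W) $$ (k,l)"
    unfolding triple_entry[OF Ws A W'c k l] triple_entry[OF W'c A Ws k l] by (simp add: sum.distrib)
  have HW: "?H * ?W \<in> carrier_mat N N" using H Ws by simp
  have HWA: "?H * ?W * A \<in> carrier_mat N N" using HW A by simp
  have WA: "?W * A \<in> carrier_mat N N" using Ws A by simp
  have m1: "W' * A * adj ?W = (- \<i>) \<cdot>\<^sub>m (?H * ?Q)"
  proof -
    have "W' * A * adj ?W = ((- \<i>) \<cdot>\<^sub>m (?H * ?W * A)) * adj ?W"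
      unfolding W'_def using mult_smult_assoc_mat[OF HW A] by simp
    also have "\<dots> = (- \<i>) \<cdot>\<^sub>m (?H * ?W * A * adj ?W)" by (rule mult_smult_assoc_mat[OF HWA aW])
    also have "?H * ?W * A * adj ?W = ?H * ?Q"
      using assoc_mult_mat[OF H Ws A] assoc_mult_mat[OF H WA aW] by simp
    finally show ?thesis .
  qed
  have aW': "adj W' = \<i> \<cdot>\<^sub>m (adj ?W * ?H)"
    unfolding W'_def adj_smult adj_mult[OF H Ws] using Hm_adj[OF hc hh, where r=r and s=s] by simp
  have aWH: "adj ?W * ?H \<in> carrier_mat N N" using aW H by simp
  have m2: "?W * A * adj W' = \<i> \<cdot>\<^sub>m (?Q * ?H)"
  proof -
    have "?W * A * adj W' = \<i> \<cdot>\<^sub>m (?W * A * (adj ?W * ?H))"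
      unfolding aW' by (rule mult_smult_distrib[OF WA aWH])
    also have "?W * A * (adj ?W * ?H) = ?Q * ?H"
      using assoc_mult_mat[OF WA aW H] by simp
    finally show ?thesis .
  qed
  have "(?W * A * adj W') $$ (k,l) + (W' * A * adj ?W) $$ (k,l) = \<i> * (?Q * ?H) $$ (k,l) - \<i> * (?H * ?Q) $$ (k,l)"
  proof -
    have QH: "?Q * ?H \<in> carrier_mat N N" "?H * ?Q \<in> carrier_mat N N" using Qc H by auto
    then have dims: "dim_row (?Q * ?H) = N" "dim_col (?Q * ?H) = N" "dim_row (?H * ?Q) = N" "dim_col (?H * ?Q) = N"
      by auto
    show ?thesis unfolding m1 m2 using k l dims by simp
  qed
  also have "\<dots> = (\<Sum>j<m. complex_of_real (r j s) * Kmat N (h j) ?Q $$ (k,l))"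
  proof -
    have hl: "(?H * ?Q) $$ (k,l) = (\<Sum>j<m. complex_of_real (r j s) * (h j * ?Q) $$ (k,l))"
      using Hm_left[OF _ Qc k l] hc by blast
    have hr: "(?Q * ?H) $$ (k,l) = (\<Sum>j<m. complex_of_real (r j s) * (?Q * h j) $$ (k,l))"
      using Hm_right[OF _ Qc k l] hc by blast
    show ?thesis unfolding hl hr using k l
      by (simp add: Kmat_def sum_distrib_left sum_subtractf[symmetric] algebra_simps)
  qed
  finally have val2: "(\<Sum>q<N. (\<Sum>p<N. ?W $$ (k,p) * A $$ (p,q)) * cnj (W' $$ (l,q)) + (\<Sum>p<N. W' $$ (k,p) * A $$ (p,q)) * cnj (?W $$ (l,q)))
      = (\<Sum>j<m. complex_of_real (r j s) * Kmat N (h j) ?Q $$ (k,l))" using val by simp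
  show ?thesis
    by (rule has_vector_derivative_transform[OF s _ deriv[unfolded val2]]) (use eqQ in auto)
qed


section \<open>Influence in terms of psi\<close>

lemma pweight_sum: "real (pweight n a) = (\<Sum>i<n. if a i \<noteq> (0,0) then 1 else 0)"
proof -
  have "pweight n a = card {i \<in> {..<n}. a i \<noteq> (0,0)}" unfolding pweight_def by (simp add: lessThan_def conj_commute)
  also have "\<dots> = (\<Sum>i\<in>{i \<in> {..<n}. a i \<noteq> (0,0)}. 1)" by simp
  also have "\<dots> = (\<Sum>i<n. if a i \<noteq> (0,0) then 1 else 0)" by (rule sum.inter_filter) simp
  finally show ?thesis by (simp add: of_nat_sum if_distrib[of "of_nat :: nat \<Rightarrow> real"] cong: if_cong)
qed

lemma influence_psi: "influence d n X = Re (\<Sum>i<n. psi d n i X X) / (real (d^n))\<^sup>2"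
proof -
  have "Re (\<Sum>i<n. psi d n i X X) = (\<Sum>a\<in>Vn d n. real (pweight n a) * (cmod (cpa d n X a))\<^sup>2)"
  proof -
    have "Re (\<Sum>i<n. psi d n i X X) = (\<Sum>i<n. \<Sum>a\<in>Vn d n. if a i \<noteq> (0,0) then (cmod (cpa d n X a))\<^sup>2 else 0)"
      unfolding psi_def by (simp add: cnj_mult_self if_distrib[of Re] cong: if_cong)
    also have "\<dots> = (\<Sum>a\<in>Vn d n. \<Sum>i<n. if a i \<noteq> (0,0) then (cmod (cpa d n X a))\<^sup>2 else 0)"
      by (rule sum.swap)
    also have "\<dots> = (\<Sum>a\<in>Vn d n. real (pweight n a) * (cmod (cpa d n X a))\<^sup>2)"
      unfolding pweight_sum sum_distrib_right by (intro sum.cong refl) auto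
    finally show ?thesis .
  qed
  moreover have "influence d n X = (\<Sum>a\<in>Vn d n. real (pweight n a) * (cmod (cpa d n X a))\<^sup>2) / (real (d^n))\<^sup>2"
    unfolding influence_def pauli_prob_def cpa_def
    by (simp add: sum_divide_distrib power_mult power_mult_distrib mult.commute)
  ultimately show ?thesis by simp
qed

lemma per_j_bound:
  assumes d: "2 \<le> d" and hc: "h \<in> carrier_mat (d^n) (d^n)" and herm: "hermitian_op h"
    and supp: "two_qudit_supported d n h" and on: "op_norm h = 1"
    and Q: "Q \<in> carrier_mat (d^n) (d^n)" and fQ: "(frob (d^n) Q)\<^sup>2 = real (d^n)"
  shows "(\<Sum>i<n. \<bar>Re (psi d n i Q (Kmat (d^n) h Q))\<bar>) \<le> 4 * (real (d^n))\<^sup>2"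
proof -
  have d0: "0 < d" using d by simp
  obtain S g where S: "S \<subseteq> {..<n}" "card S \<le> 2" and hg: "\<forall>k<d^n. \<forall>l<d^n.
           h $$ (k,l) = (if (\<forall>i<n. i \<notin> S \<longrightarrow> qdigit d k i = qdigit d l i)
                         then g (\<lambda>i. if i \<in> S then qdigit d k i else 0)
                                (\<lambda>i. if i \<in> S then qdigit d l i else 0)
                         else 0)"
    using supp unfolding two_qudit_supported_def by blast
  have zero: "Re (psi d n i Q (Kmat (d^n) h Q)) = 0" if "i < n" "i \<notin> S" for i
    using psi_Re_zero[OF d that(1) offsupp_from[OF d0 that S(1) hg] herm hc Q] .
  have one: "\<bar>Re (psi d n i Q (Kmat (d^n) h Q))\<bar> \<le> 2 * (real (d^n))\<^sup>2" for i
  proof -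
    have "\<bar>Re (psi d n i Q (Kmat (d^n) h Q))\<bar> \<le> cmod (psi d n i Q (Kmat (d^n) h Q))" by (rule abs_Re_le_cmod)
    also have "\<dots> \<le> real (d^n) * frob (d^n) Q * frob (d^n) (Kmat (d^n) h Q)"
      by (rule psi_bound[OF d Q Kmat_carrier])
    also have "\<dots> \<le> real (d^n) * frob (d^n) Q * (2 * frob (d^n) Q)"
      by (intro mult_left_mono frob_K[OF herm hc on Q]) (simp_all add: frob_nonneg)
    also have "\<dots> = 2 * real (d^n) * (frob (d^n) Q)\<^sup>2" by (simp add: power2_eq_square)
    also have "\<dots> = 2 * (real (d^n))\<^sup>2" using fQ by (simp add: power2_eq_square)
    finally show ?thesis .
  qed
  have "(\<Sum>i<n. \<bar>Re (psi d n i Q (Kmat (d^n) h Q))\<bar>) = (\<Sum>i\<in>S. \<bar>Re (psi d n i Q (Kmat (d^n) h Q))\<bar>)"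
    using zero S(1) by (intro sum.mono_neutral_right) auto
  also have "\<dots> \<le> (\<Sum>i\<in>S. 2 * (real (d^n))\<^sup>2)" by (intro sum_mono one)
  also have "\<dots> = real (card S) * (2 * (real (d^n))\<^sup>2)" by simp
  also have "\<dots> \<le> 2 * (2 * (real (d^n))\<^sup>2)" using S(2) by (intro mult_right_mono) auto
  finally show ?thesis by simp
qed



lemma hs_norm_frob: assumes A: "A \<in> carrier_mat (d^n) (d^n)" and hs: "hs_norm d n A = 1" and d0: "0 < d"
  shows "(frob (d^n) A)\<^sup>2 = real (d^n)"
proof -
  let ?N = "d^n"
  have aA: "adj A \<in> carrier_mat ?N ?N" using A by (rule adj_carrier)
  have dr: "dim_row (adj A * A) = ?N" using aA by simp
  have "mtrace (adj A * A) = (\<Sum>k<?N. \<Sum>l<?N. cnj (A $$ (l,k)) * A $$ (l,k))"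
    unfolding mtrace_def dr using aA A
    by (auto simp: mult_entry[OF aA A] adj_entry[OF A] simp del: index_mult_mat intro!: sum.cong)
  also have "\<dots> = Fro ?N A A" unfolding Fro_def by (rule sum.swap)
  also have "\<dots> = of_real ((frob ?N A)\<^sup>2)" by (rule Fro_self)
  finally have tr: "mtrace (adj A * A) = of_real ((frob ?N A)\<^sup>2)" .
  have "sqrt ((frob ?N A)\<^sup>2 / real ?N) = 1" using hs unfolding hs_norm_def hs_inner_def tr
    by (metis Re_divide_of_nat Re_complex_of_real)
  then have e: "(frob ?N A)\<^sup>2 / real ?N = 1" using real_sqrt_eq_1_iff by blast
  have "real ?N > 0" using d0 by simp
  then show ?thesis using e by (simp add: divide_eq_1_iff)
qed


lemma cpa_lin: assumes "\<And>j. j < m \<Longrightarrow> K j \<in> carrier_mat (d^n) (d^n)"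
  shows "cpa d n (mat (d^n) (d^n) (\<lambda>(k,l). \<Sum>j<m. c j * K j $$ (k,l))) a = (\<Sum>j<m. c j * cpa d n (K j) a)"
proof -
  have "cpa d n (mat (d^n) (d^n) (\<lambda>(k,l). \<Sum>j<m. c j * K j $$ (k,l))) a =
     (\<Sum>k<d^n. \<Sum>l<d^n. (\<Sum>j<m. c j * K j $$ (k,l)) * pe d n a l k)"
  proof -
    have "cpa d n (mat (d^n) (d^n) (\<lambda>(k,l). \<Sum>j<m. c j * K j $$ (k,l))) a =
      (\<Sum>k<d^n. \<Sum>l<d^n. (mat (d^n) (d^n) (\<lambda>(k,l). \<Sum>j<m. c j * K j $$ (k,l))) $$ (k,l) * pe d n a l k)"
      by (rule cpa_expand) simp
    also have "\<dots> = (\<Sum>k<d^n. \<Sum>l<d^n. (\<Sum>j<m. c j * K j $$ (k,l)) * pe d n a l k)"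
      by (intro sum.cong refl) simp
    finally show ?thesis .
  qed
  also have "\<dots> = (\<Sum>k<d^n. \<Sum>l<d^n. \<Sum>j<m. c j * (K j $$ (k,l) * pe d n a l k))"
    by (simp add: sum_distrib_right mult.assoc)
  also have "\<dots> = (\<Sum>k<d^n. \<Sum>j<m. \<Sum>l<d^n. c j * (K j $$ (k,l) * pe d n a l k))"
    by (rule sum.cong[OF refl], rule sum.swap)
  also have "\<dots> = (\<Sum>j<m. \<Sum>k<d^n. \<Sum>l<d^n. c j * (K j $$ (k,l) * pe d n a l k))"
    by (rule sum.swap)
  also have "\<dots> = (\<Sum>j<m. c j * (\<Sum>k<d^n. \<Sum>l<d^n. K j $$ (k,l) * pe d n a l k))"
    by (simp add: sum_distrib_left)
  also have "\<dots> = (\<Sum>j<m. c j * cpa d n (K j) a)"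
    using assms by (auto simp: cpa_expand intro!: sum.cong)
  finally show ?thesis .
qed

lemma sum_if_mult: "(\<Sum>a\<in>A. if P a then c * f a else 0) = (c::complex) * (\<Sum>a\<in>A. if P a then f a else 0)"
  by (auto simp: sum_distrib_left intro!: sum.cong)

lemma psi_lin: assumes "\<And>j. j < m \<Longrightarrow> K j \<in> carrier_mat (d^n) (d^n)"
  shows "psi d n i X (mat (d^n) (d^n) (\<lambda>(k,l). \<Sum>j<m. c j * K j $$ (k,l))) = (\<Sum>j<m. c j * psi d n i X (K j))"
proof -
  have e: "\<And>a. cpa d n (mat (d^n) (d^n) (\<lambda>(k,l). \<Sum>j<m. c j * K j $$ (k,l))) a = (\<Sum>j<m. c j * cpa d n (K j) a)"
    by (rule cpa_lin[OF assms])
  have "psi d n i X (mat (d^n) (d^n) (\<lambda>(k,l). \<Sum>j<m. c j * K j $$ (k,l))) =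
     (\<Sum>a\<in>Vn d n. \<Sum>j<m. if a i \<noteq> (0,0) then c j * (cnj (cpa d n X a) * cpa d n (K j) a) else 0)"
    unfolding psi_def e by (intro sum.cong refl) (simp add: sum_distrib_left mult.left_commute)
  also have "\<dots> = (\<Sum>j<m. \<Sum>a\<in>Vn d n. if a i \<noteq> (0,0) then c j * (cnj (cpa d n X a) * cpa d n (K j) a) else 0)"
    by (rule sum.swap)
  also have "\<dots> = (\<Sum>j<m. c j * psi d n i X (K j))"
    unfolding psi_def by (intro sum.cong refl) (rule sum_if_mult)
  finally show ?thesis .
qed

lemma psi_swap: "psi d n i Y X = cnj (psi d n i X Y)"
  unfolding psi_def by (auto simp: mult.commute intro!: sum.cong)

lemma Fro_lin: "Fro N X (mat N N (\<lambda>(k,l). \<Sum>j<m. c j * K j $$ (k,l))) = (\<Sum>j<m. c j * Fro N X (K j))"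
proof -
  have "Fro N X (mat N N (\<lambda>(k,l). \<Sum>j<m. c j * K j $$ (k,l))) = (\<Sum>k<N. \<Sum>l<N. \<Sum>j<m. c j * (cnj (X $$ (k,l)) * K j $$ (k,l)))"
    unfolding Fro_def by (intro sum.cong refl) (simp add: sum_distrib_left mult.left_commute)
  also have "\<dots> = (\<Sum>k<N. \<Sum>j<m. \<Sum>l<N. c j * (cnj (X $$ (k,l)) * K j $$ (k,l)))"
    by (rule sum.cong[OF refl], rule sum.swap)
  also have "\<dots> = (\<Sum>j<m. \<Sum>k<N. \<Sum>l<N. c j * (cnj (X $$ (k,l)) * K j $$ (k,l)))"
    by (rule sum.swap)
  also have "\<dots> = (\<Sum>j<m. c j * Fro N X (K j))"
    unfolding Fro_def by (simp add: sum_distrib_left)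
  finally show ?thesis .
qed


lemma main_bound:
  fixes d n m :: nat and h :: "nat \<Rightarrow> complex mat" and r :: "nat \<Rightarrow> real \<Rightarrow> real" and U A :: "complex mat"
  assumes d: "2 \<le> d"
    and hc: "\<And>j. j < m \<Longrightarrow> h j \<in> carrier_mat (d^n) (d^n)"
    and hh: "\<And>j. j < m \<Longrightarrow> hermitian_op (h j)"
    and hs: "\<And>j. j < m \<Longrightarrow> two_qudit_supported d n (h j)"
    and hon: "\<And>j. j < m \<Longrightarrow> op_norm (h j) = 1"
    and rc: "\<forall>j<m. continuous_on {0..1} (r j)"
    and poe: "path_ordered_exp (d^n) (\<lambda>s. mat (d^n) (d^n) (\<lambda>(k,l). \<Sum>j<m. complex_of_real (r j s) * h j $$ (k,l))) U"
    and A: "A \<in> carrier_mat (d^n) (d^n)" and hsA: "hs_norm d n A = 1"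
  shows "\<bar>influence d n (U * A * adj U) - influence d n A\<bar> \<le> 8 * integral {0..1} (\<lambda>s. \<Sum>j<m. \<bar>r j s\<bar>)"
proof -
  define N where "N = d^n"
  have d0: "0 < d" using d by simp
  have N0: "real N > 0" unfolding N_def using d0 by simp
  obtain W where Wc: "\<forall>s\<in>{0..1}. W s \<in> carrier_mat N N" and W0: "W 0 = 1\<^sub>m N" and W1: "W 1 = U"
     and Wd: "\<forall>s\<in>{0..1}. \<forall>k<N. \<forall>l<N. ((\<lambda>t. W t $$ (k,l)) has_vector_derivative
        (- \<i> * (Hm N m h r s * W s) $$ (k,l))) (at s within {0..1})"
    using poe unfolding path_ordered_exp_def Hm_def N_def by blast
  define Q where "Q t = W t * A * adj (W t)" for t
  have hcN: "\<And>j. j < m \<Longrightarrow> h j \<in> carrier_mat N N" using hc unfolding N_def .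
  have AN: "A \<in> carrier_mat N N" using A unfolding N_def .
  have Qc: "Q s \<in> carrier_mat N N" if "s \<in> {0..1}" for s
    using Wc that AN adj_carrier unfolding Q_def by (metis mult_carrier_mat)
  define K where "K j s = Kmat N (h j) (Q s)" for j s
  define D where "D s = mat N N (\<lambda>(k,l). \<Sum>j<m. complex_of_real (r j s) * K j s $$ (k,l))" for s
  have Kc: "K j s \<in> carrier_mat N N" for j s unfolding K_def by (rule Kmat_carrier)
  have Dc: "D s \<in> carrier_mat N N" for s unfolding D_def by simp
  have Qd: "((\<lambda>t. Q t $$ (k,l)) has_vector_derivative D s $$ (k,l)) (at s within {0..1})"
    if s: "s \<in> {0..1}" and k: "k < N" and l: "l < N" for s k l
    using Q_deriv[OF hcN hh AN Wc Wd s k l] k l unfolding Q_def D_def K_def by simp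
  have Q0: "Q 0 = A" unfolding Q_def W0 adj_one using AN by simp
  have Q1: "Q 1 = U * A * adj U" unfolding Q_def W1 ..
  \<comment> \<open>norm conservation\<close>
  have FroQD: "Re (Fro N (Q s) (D s)) = 0" if s: "s \<in> {0..1}" for s
  proof -
    have "Fro N (Q s) (D s) = (\<Sum>j<m. complex_of_real (r j s) * Fro N (Q s) (K j s))"
      unfolding D_def by (rule Fro_lin)
    then have "Re (Fro N (Q s) (D s)) = (\<Sum>j<m. r j s * Re (Fro N (Q s) (K j s)))" by simp
    also have "\<dots> = 0" unfolding K_def using Re_Fro_K[OF hh hcN Qc[OF s]] by simp
    finally show ?thesis .
  qed
  have phid: "((\<lambda>t. Fro N (Q t) (Q t)) has_vector_derivative 0) (at s within {0..1})" if s: "s \<in> {0..1}" for s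
  proof -
    have "((\<lambda>t. Fro N (Q t) (Q t)) has_vector_derivative
       (\<Sum>k<N. \<Sum>l<N. cnj (Q s $$ (k,l)) * D s $$ (k,l) + cnj (D s $$ (k,l)) * Q s $$ (k,l))) (at s within {0..1})"
      unfolding Fro_def by (intro has_vector_derivative_sum has_vector_derivative_mult has_vector_derivative_cnj Qd[OF s]) auto
    moreover have "(\<Sum>k<N. \<Sum>l<N. cnj (Q s $$ (k,l)) * D s $$ (k,l) + cnj (D s $$ (k,l)) * Q s $$ (k,l)) =
        Fro N (Q s) (D s) + cnj (Fro N (Q s) (D s))"
      unfolding Fro_def by (simp add: sum.distrib mult.commute)
    moreover have "Fro N (Q s) (D s) + cnj (Fro N (Q s) (D s)) = 0"
      using FroQD[OF s] by (simp add: complex_add_cnj)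
    ultimately show ?thesis by simp
  qed
  have "\<exists>c. \<forall>x\<in>{0..1}. Fro N (Q x) (Q x) = c"
  proof (rule has_derivative_zero_constant)
    show "convex {0..1::real}" by simp
    fix x :: real assume "x \<in> {0..1}"
    then show "((\<lambda>t. Fro N (Q t) (Q t)) has_derivative (\<lambda>h. 0)) (at x within {0..1})"
      using phid[of x] unfolding has_vector_derivative_def by simp
  qed
  then obtain c where c: "\<forall>x\<in>{0..1}. Fro N (Q x) (Q x) = c" by blast
  have frobA: "(frob N A)\<^sup>2 = real N" unfolding N_def by (rule hs_norm_frob[OF A hsA d0])
  have frobQ: "(frob N (Q s))\<^sup>2 = real N" if s: "s \<in> {0..1}" for s
  proof -
    have "complex_of_real ((frob N (Q s))\<^sup>2) = Fro N (Q s) (Q s)" by (simp add: Fro_self)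
    also have "\<dots> = Fro N (Q 0) (Q 0)" using c s by simp
    also have "\<dots> = complex_of_real (real N)" unfolding Q0 Fro_self frobA ..
    finally show ?thesis using of_real_eq_iff by blast
  qed
  define cq where "cq t a = (\<Sum>k<N. \<Sum>l<N. Q t $$ (k,l) * pe d n a l k)" for t a
  define cd where "cd s a = (\<Sum>k<N. \<Sum>l<N. D s $$ (k,l) * pe d n a l k)" for s a
  define G where "G t = (\<Sum>i<n. \<Sum>a\<in>Vn d n. (if a i \<noteq> (0,0) then 1 else 0) * (cnj (cq t a) * cq t a))" for t
  define G' where "G' s = (\<Sum>i<n. \<Sum>a\<in>Vn d n. (if a i \<noteq> (0,0) then 1 else 0) *
       (cnj (cq s a) * cd s a + cnj (cd s a) * cq s a))" for s
  have cqd: "((\<lambda>t. cq t a) has_vector_derivative cd s a) (at s within {0..1})" if s: "s \<in> {0..1}" for s a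
    unfolding cq_def cd_def by (intro has_vector_derivative_sum has_vector_derivative_mult_left Qd[OF s]) auto
  have Gd: "(G has_vector_derivative G' s) (at s within {0..1})" if s: "s \<in> {0..1}" for s
    unfolding G_def G'_def
    by (intro has_vector_derivative_sum has_vector_derivative_mult_right has_vector_derivative_mult
        has_vector_derivative_cnj cqd[OF s])
  have cqe: "cq t a = cpa d n (Q t) a" if "t \<in> {0..1}" for t a
    using cpa_expand[of "Q t" d n a] Qc[OF that] unfolding cq_def N_def by simp
  have cde: "cd s a = cpa d n (D s) a" for s a
    using cpa_expand[of "D s" d n a] Dc unfolding cd_def N_def by simp
  have Gpsi: "G t = (\<Sum>i<n. psi d n i (Q t) (Q t))" if t: "t \<in> {0..1}" for t
    unfolding G_def psi_def cqe[OF t] by (intro sum.cong refl) simp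
  define b where "b s = 8 * (real N)\<^sup>2 * (\<Sum>j<m. \<bar>r j s\<bar>)" for s
  have G'b: "norm (G' s) \<le> b s" if s: "s \<in> {0..1}" for s
  proof -
    let ?z = "\<lambda>i. psi d n i (Q s) (D s)"
    let ?R = "\<lambda>i j. Re (psi d n i (Q s) (K j s))"
    have QcN: "Q s \<in> carrier_mat (d^n) (d^n)" using Qc[OF s] unfolding N_def .
    have KcN: "\<And>j. j < m \<Longrightarrow> K j s \<in> carrier_mat (d^n) (d^n)" using Kc unfolding N_def by blast
    have G'e: "G' s = (\<Sum>i<n. complex_of_real (2 * Re (?z i)))"
    proof -
      have "G' s = (\<Sum>i<n. ?z i + psi d n i (D s) (Q s))"
        unfolding G'_def psi_def cqe[OF s] cde sum.distrib[symmetric] by (intro sum.cong refl) simp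
      then show ?thesis by (simp add: psi_swap[of d n _ "D s"] complex_add_cnj)
    qed
    have Rez: "Re (?z i) = (\<Sum>j<m. r j s * ?R i j)" for i
    proof -
      have "?z i = (\<Sum>j<m. complex_of_real (r j s) * psi d n i (Q s) (K j s))"
        unfolding D_def N_def by (rule psi_lin[OF KcN])
      then show ?thesis by simp
    qed
    have "norm (G' s) \<le> (\<Sum>i<n. norm (complex_of_real (2 * Re (?z i))))"
      unfolding G'e by (rule norm_sum)
    also have "\<dots> = (\<Sum>i<n. 2 * \<bar>\<Sum>j<m. r j s * ?R i j\<bar>)"
      by (intro sum.cong refl) (subst Rez[symmetric], simp add: abs_mult)
    also have "\<dots> \<le> (\<Sum>i<n. 2 * (\<Sum>j<m. \<bar>r j s\<bar> * \<bar>?R i j\<bar>))"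
      by (intro sum_mono mult_left_mono) (auto intro: order_trans[OF sum_abs] simp: abs_mult)
    also have "\<dots> = 2 * (\<Sum>j<m. \<bar>r j s\<bar> * (\<Sum>i<n. \<bar>?R i j\<bar>))"
      by (simp add: sum_distrib_left sum.swap[of _ "{..<n}"])
    also have "\<dots> \<le> 2 * (\<Sum>j<m. \<bar>r j s\<bar> * (4 * (real N)\<^sup>2))"
    proof (rule mult_left_mono[OF sum_mono])
      fix j assume j: "j \<in> {..<m}"
      have "(\<Sum>i<n. \<bar>?R i j\<bar>) \<le> 4 * (real (d^n))\<^sup>2"
        unfolding K_def N_def
        by (rule per_j_bound[OF d hc hh hs hon QcN]) (use j frobQ[OF s] N_def in auto)
      then show "\<bar>r j s\<bar> * (\<Sum>i<n. \<bar>?R i j\<bar>) \<le> \<bar>r j s\<bar> * (4 * (real N)\<^sup>2)"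
        unfolding N_def by (intro mult_left_mono) auto
    qed simp
    also have "\<dots> = b s" unfolding b_def by (simp add: sum_distrib_left mult_ac)
    finally show ?thesis .
  qed
  have ftc: "(G' has_integral (G 1 - G 0)) {0..1}"
    by (rule fundamental_theorem_of_calculus) (use Gd in auto)
  have bint: "b integrable_on {0..1}"
    unfolding b_def using rc by (intro integrable_continuous_interval continuous_intros) auto
  have "norm (G 1 - G 0) \<le> integral {0..1} b"
    using integral_norm_bound_integral[OF has_integral_integrable[OF ftc] bint G'b] integral_unique[OF ftc] by simp
  also have "integral {0..1} b = 8 * (real N)\<^sup>2 * integral {0..1} (\<lambda>s. \<Sum>j<m. \<bar>r j s\<bar>)"
    unfolding b_def using integral_cmul[where c="8 * (real N)\<^sup>2" and f="\<lambda>s. \<Sum>j<m. \<bar>r j s\<bar>" and S="{0..1}"]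
    by (simp add: mult.assoc)
  finally have main: "norm (G 1 - G 0) \<le> 8 * (real N)\<^sup>2 * integral {0..1} (\<lambda>s. \<Sum>j<m. \<bar>r j s\<bar>)" .
  have i1: "influence d n (U * A * adj U) = Re (G 1) / (real N)\<^sup>2"
    unfolding Q1[symmetric] influence_psi N_def[symmetric] using Gpsi[of 1] by simp
  have i0: "influence d n A = Re (G 0) / (real N)\<^sup>2"
    unfolding influence_psi N_def[symmetric] using Gpsi[of 0] Q0 by simp
  have "influence d n (U * A * adj U) - influence d n A = Re (G 1 - G 0) / (real N)\<^sup>2"
    unfolding i1 i0 by (simp add: diff_divide_distrib)
  then have "\<bar>influence d n (U * A * adj U) - influence d n A\<bar> \<le> norm (G 1 - G 0) / (real N)\<^sup>2"
    using abs_Re_le_cmod[of "G 1 - G 0"] N0 by (simp add: divide_right_mono)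
  also have "\<dots> \<le> 8 * integral {0..1} (\<lambda>s. \<Sum>j<m. \<bar>r j s\<bar>)"
    using main N0 by (simp add: divide_le_eq mult_ac)
  finally show ?thesis .
qed


lemma hs_norm_one: assumes "0 < d" shows "hs_norm d n (1\<^sub>m (d^n)) = 1"
proof -
  have "mtrace (adj (1\<^sub>m (d^n)) * 1\<^sub>m (d^n)) = of_nat (d^n)"
    unfolding adj_one mtrace_def by simp
  then show ?thesis unfolding hs_norm_def hs_inner_def using assms by simp
qed

theorem mainTheorem1:
  fixes d n m :: nat and h :: "nat \<Rightarrow> complex mat" and U :: "complex mat"
  assumes "d \<ge> 2" and "n \<ge> 1"
    and "\<And>j. j < m \<Longrightarrow> h j \<in> carrier_mat (d^n) (d^n)"
    and "\<And>j. j < m \<Longrightarrow> hermitian_op (h j)"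
    and "\<And>j. j < m \<Longrightarrow> mtrace (h j) = 0"
    and "\<And>j. j < m \<Longrightarrow> two_qudit_supported d n (h j)"
    and "\<And>j. j < m \<Longrightarrow> op_norm (h j) = 1"
    and "U \<in> SU (d^n)"
  shows "circuit_cost (d^n) m h U \<ge> ereal (circuit_sensitivity d n U / 8)"
proof -
  have d0: "0 < d" using assms(1) by simp
  let ?X = "{\<bar>influence d n (U * A * adj U) - influence d n A\<bar> | A.
            A \<in> carrier_mat (d^n) (d^n) \<and> hs_norm d n A = 1}"
  have ne: "?X \<noteq> {}"
  proof -
    have "1\<^sub>m (d^n) \<in> carrier_mat (d^n) (d^n) \<and> hs_norm d n (1\<^sub>m (d^n)) = 1"
      using hs_norm_one[OF d0, of n] by simp
    then show ?thesis by blast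
  qed
  show ?thesis
    unfolding circuit_cost_def
  proof (rule Inf_greatest)
    fix x assume "x \<in> ereal ` {integral {0..1} (\<lambda>s. \<Sum>j<m. \<bar>r j s\<bar>) | r :: nat \<Rightarrow> real \<Rightarrow> real.
            (\<forall>j<m. continuous_on {0..1} (r j)) \<and>
            path_ordered_exp (d^n) (\<lambda>s. mat (d^n) (d^n) (\<lambda>(k,l). \<Sum>j<m. complex_of_real (r j s) * h j $$ (k,l))) U}"
    then obtain r :: "nat \<Rightarrow> real \<Rightarrow> real" where x: "x = ereal (integral {0..1} (\<lambda>s. \<Sum>j<m. \<bar>r j s\<bar>))"
      and rc: "\<forall>j<m. continuous_on {0..1} (r j)"
      and poe: "path_ordered_exp (d^n) (\<lambda>s. mat (d^n) (d^n) (\<lambda>(k,l). \<Sum>j<m. complex_of_real (r j s) * h j $$ (k,l))) U"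
      by blast
    have "circuit_sensitivity d n U \<le> 8 * integral {0..1} (\<lambda>s. \<Sum>j<m. \<bar>r j s\<bar>)"
      unfolding circuit_sensitivity_def
    proof (rule cSup_least[OF ne])
      fix y assume "y \<in> ?X"
      then obtain A where y: "y = \<bar>influence d n (U * A * adj U) - influence d n A\<bar>"
        and A: "A \<in> carrier_mat (d^n) (d^n)" and hA: "hs_norm d n A = 1" by blast
      show "y \<le> 8 * integral {0..1} (\<lambda>s. \<Sum>j<m. \<bar>r j s\<bar>)"
        unfolding y by (rule main_bound[OF assms(1,3,4,6,7) rc poe A hA])
    qed
    then show "ereal (circuit_sensitivity d n U / 8) \<le> x" unfolding x by simp
  qed
qed


end
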